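(* Let $\alpha>0$, $\varkappa^{\pm}\in\mathbb{R}$, $M>0$, and let $g$ be a smooth diffeomorphism of $\mathbb{R}$ with $g(x)=x+\varkappa^{-}$ for $x\le -M$ and $g(x)=x+\varkappa^{+}$ for $x\ge M$. Let $G_\Xi(x)=G^{(\mathrm c)}_\Xi(x)+\mathcal{G}_\Xi(x)-\mathcal{G}_\Xi(g(x)-\mathrm{i}\alpha)$, where $G^{(\mathrm c)}_\Xi$ is smooth with support in $[-M,M]$, and $\mathcal{G}_\Xi$ is smooth on $\overline{\mathcal{S}_\alpha}$, holomorphic on $\mathcal{S}_\alpha\cap\{|\mathrm{Re}(z)|>M/2\}$, and satisfies, for some $\varrho>0$, $\mathcal{G}_\Xi(z)=\mathrm{O}(e^{\mp\varrho z})$ as $\mathrm{Re}(z)\to\pm\infty$ uniformly on $\overline{\mathcal{S}_\alpha}\cap\{|\mathrm{Re}(z)|>M/2\}$. Let $\Xi$ be holomorphic on $\mathcal{S}_\alpha$ with boundary values $\Xi_-$ on $\mathbb{R}$ and $\Xi_+$ on $\mathbb{R}-\mathrm{i}\alpha$ such that $x\mapsto\Xi_+(g(x)-\mathrm{i}\alpha)$ and $x\mapsto \Xi_-(x)$ are in $L^2_{\mathrm{loc}}(\mathbb{R})$, $\Xi_+(g(x)-\mathrm{i}\alpha)=\Xi_-(x)+G_\Xi(x)$ for $x\in\mathbb{R}$, and for some constants $C_\Xi,C_{-1}$, $\Xi(z)=C_\Xi\delta_{\pm,-}+C_{-1}/z+\mathrm{O}(z^{-2})$ as $\mathrm{Re}(z)\to\pm\infty$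 uniformly up to the boundary of $\mathcal{S}_\alpha$. Then, uniformly up to the boundary, $$\Xi(z)=C_\Xi\,\delta_{\pm,-}-\mathcal{G}_\Xi(z)+\mathrm{O}\Big(e^{\mp\frac{2\pi}{\alpha}\widetilde\gamma_\pm z}\Big)\quad\text{as }\mathrm{Re}(z)\to\pm\infty,\qquad \widetilde\gamma_\pm=\frac{-\mathrm{i}\alpha}{-\mathrm{i}\alpha+\varkappa^{\pm}}.$$
   Context: $\mathcal{S}_{\alpha}=\{z\in\mathbb{C}:-\alpha<\mathrm{Im}(z)<0\}$; boundary values are limits from inside $\mathcal{S}_\alpha$. $\delta_{\pm,-}$ is $1$ for $\mathrm{Re}(z)\to-\infty$ and $0$ for $\mathrm{Re}(z)\to+\infty$. $\mathrm{O}$ of an exponential bounds the modulus by a constant times the modulus of the exponential. *)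

theory Defs
  imports "HOL-Complex_Analysis.Complex_Analysis"
begin

definition strip :: "real \<Rightarrow> complex set" where
  "strip \<alpha> = {z. - \<alpha> < Im z \<and> Im z < 0}"

coinductive smooth_on :: "'a::real_normed_vector set \<Rightarrow> ('a \<Rightarrow> 'b::real_normed_vector) \<Rightarrow> bool"
  where
  "\<lbrakk> \<forall>x\<in>U. (f has_derivative f' x) (at x);
     \<forall>v. smooth_on U (\<lambda>x. f' x v) \<rbrakk> \<Longrightarrow> smooth_on U f"

definition smooth_upto :: "'a::real_normed_vector set \<Rightarrow> ('a \<Rightarrow> 'b::real_normed_vector) \<Rightarrow> bool" where
  "smooth_upto A f \<longleftrightarrow> (\<exists>U h. open U \<and> A \<subseteq> U \<and> smooth_on U h \<and> (\<forall>x\<in>A. h x = f x))"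

definition smooth_diffeo :: "(real \<Rightarrow> real) \<Rightarrow> bool" where
  "smooth_diffeo g \<longleftrightarrow> bij g \<and> smooth_on UNIV g \<and> smooth_on UNIV (inv g)"

definition L2_loc :: "(real \<Rightarrow> complex) \<Rightarrow> bool" where
  "L2_loc f \<longleftrightarrow> (\<forall>a b. f measurable_on {a..b} \<and> (\<lambda>x. (cmod (f x))\<^sup>2) integrable_on {a..b})"

end

theory Submission
  imports Defs
begin


lemma kern_exp_eq_1:
  fixes \<alpha> \<kappa> :: real and u :: complex
  assumes \<alpha>: "\<alpha> > 0" and eq: "exp (2*pi*\<i>/Complex \<kappa> (-\<alpha>) * u) = 1"
  shows "\<exists>n::int. u = of_int n * Complex \<kappa> (-\<alpha>)"
proof -
  define p where "p = Complex \<kappa> (-\<alpha>)"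
  have p0: "p \<noteq> 0" using \<alpha> by (auto simp: p_def complex_eq_iff)
  from eq[unfolded exp_eq_1] obtain n::int where
     "Re (2*pi*\<i>/p * u) = 0" "Im (2*pi*\<i>/p * u) = of_int (2*n) * pi"
    unfolding p_def by blast
  then have "2*pi*\<i>/p * u = of_int n * (2*pi*\<i>)" by (simp add: complex_eq_iff)
  then have "u = of_int n * p" using p0 by (simp add: field_simps)
  then show ?thesis unfolding p_def by blast
qed

lemma kern_exp_ne_1:
  fixes \<alpha> \<kappa> :: real and u :: complex
  assumes \<alpha>: "\<alpha> > 0" and "\<bar>Im u\<bar> < \<alpha>" "u \<noteq> 0"
  shows "exp (2*pi*\<i>/Complex \<kappa> (-\<alpha>) * u) \<noteq> 1"
proof
  assume "exp (2*pi*\<i>/Complex \<kappa> (-\<alpha>) * u) = 1"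
  from kern_exp_eq_1[OF \<alpha> this] obtain n::int where n: "u = of_int n * Complex \<kappa> (-\<alpha>)" by blast
  then have "Im u = - of_int n * \<alpha>" by simp
  with assms have "\<bar>of_int n\<bar> * \<alpha> < 1 * \<alpha>" by (simp add: abs_mult)
  then have "\<bar>of_int n\<bar> < (1::real)" using \<alpha> by (meson mult_less_cancel_right_pos)
  then have "n = 0" by linarith
  with n assms show False by simp
qed

lemma kern_Re:
  fixes \<alpha> \<kappa> :: real and u :: complex
  assumes \<alpha>: "\<alpha> > 0"
  shows "Re (2*pi*\<i>/Complex \<kappa> (-\<alpha>) * u) =
     - (2*pi*\<alpha>/(\<kappa>^2+\<alpha>^2)) * Re u - (2*pi*\<kappa>/(\<kappa>^2+\<alpha>^2)) * Im u"
proof -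
  have N: "\<kappa>^2+\<alpha>^2 > 0" using \<alpha> by (simp add: add_nonneg_pos)
  have "2*pi*\<i>/Complex \<kappa> (-\<alpha>) = Complex (-2*pi*\<alpha>/(\<kappa>^2+\<alpha>^2)) (2*pi*\<kappa>/(\<kappa>^2+\<alpha>^2))"
    using N by (simp add: complex_eq_iff Re_divide Im_divide power2_eq_square)
  then show ?thesis by simp
qed

lemma kern_period:
  fixes \<alpha> \<kappa> :: real
  assumes \<alpha>: "\<alpha> > 0"
  shows "exp (2*pi*\<i>/Complex \<kappa> (-\<alpha>) * (u + Complex \<kappa> (-\<alpha>))) = exp (2*pi*\<i>/Complex \<kappa> (-\<alpha>) * u)"
proof -
  have p0: "Complex \<kappa> (-\<alpha>) \<noteq> 0" using \<alpha> by (auto simp: complex_eq_iff)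
  have "2*pi*\<i>/Complex \<kappa> (-\<alpha>) * (u + Complex \<kappa> (-\<alpha>)) = 2*pi*\<i>/Complex \<kappa> (-\<alpha>) * u + 2*pi*\<i>"
    using p0 by (simp add: field_simps)
  then show ?thesis by (simp add: exp_add)
qed



lemma cauchy_kernel_rect:
  fixes \<alpha> \<kappa> :: real and H :: "complex \<Rightarrow> complex"
  defines "c \<equiv> 2*pi*\<i>/Complex \<kappa> (-\<alpha>)"
  assumes \<alpha>: "\<alpha> > 0" and cvx: "convex \<Omega>" and op: "open \<Omega>" and holo: "H holomorphic_on \<Omega>"
    and zO: "z \<in> \<Omega>" and width: "\<And>w. w \<in> \<Omega> \<Longrightarrow> \<bar>Im (w - z)\<bar> < \<alpha>"
    and zbox: "z \<in> box a1 a3" and sub: "cbox a1 a3 \<subseteq> \<Omega>"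
  shows "((\<lambda>w. H w * (c / (exp (c*(w-z)) - 1))) has_contour_integral (2*pi*\<i>*H z)) (rectpath a1 a3)"
proof -
  have p0: "Complex \<kappa> (-\<alpha>) \<noteq> 0" using \<alpha> by (auto simp: complex_eq_iff)
  have c0: "c \<noteq> 0" using p0 by (simp add: c_def)
  have ne1: "exp (c*(w-z)) - 1 \<noteq> 0" if "w \<in> \<Omega>" "w \<noteq> z" for w
    using kern_exp_ne_1[OF \<alpha>, of "w - z" \<kappa>] width[OF that(1)] that(2) by (simp add: c_def)
  define q where "q w = (if w = z then 1 else c*(w-z) / (exp (c*(w-z)) - 1))" for w
  have holq0: "q holomorphic_on (\<Omega> - {z})"
  proof -
    have "(\<lambda>w. c*(w-z) / (exp (c*(w-z)) - 1)) holomorphic_on (\<Omega> - {z})"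
      using ne1 by (intro holomorphic_intros) auto
    then show ?thesis by (rule holomorphic_transform) (auto simp: q_def)
  qed
  have contq: "continuous_on \<Omega> q"
  proof (rule continuous_at_imp_continuous_on, intro ballI)
    fix w assume w: "w \<in> \<Omega>"
    show "isCont q w"
    proof (cases "w = z")
      case False
      have "isCont (\<lambda>w. c*(w-z) / (exp (c*(w-z)) - 1)) w"
        using ne1[OF w False] by (intro continuous_intros) auto
      moreover have "\<forall>\<^sub>F x in nhds w. c*(x-z) / (exp (c*(x-z)) - 1) = q x"
      proof -
        have "\<forall>\<^sub>F x in nhds w. x \<noteq> z" using False by (intro t1_space_nhds) auto
        then show ?thesis by eventually_elim (auto simp: q_def)
      qed
      ultimately have "((\<lambda>w. c*(w-z) / (exp (c*(w-z)) - 1)) \<longlongrightarrow> c*(w-z) / (exp (c*(w-z)) - 1)) (at w)"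
        "\<forall>\<^sub>F x in at w. c*(x-z) / (exp (c*(x-z)) - 1) = q x"
        by (auto simp: isCont_def eventually_at_filter elim: eventually_mono)
      then have "(q \<longlongrightarrow> c*(w-z) / (exp (c*(w-z)) - 1)) (at w)"
        by (rule Lim_transform_eventually)
      then show ?thesis using False by (simp add: isCont_def q_def)
    next
      case True
      have d: "((\<lambda>w. exp (c*(w-z))) has_field_derivative c * exp (c*(z-z))) (at z)"
        by (auto intro!: derivative_eq_intros)
      then have "((\<lambda>y. (exp (c*(y-z)) - exp (c*(z-z))) / (y - z)) \<longlongrightarrow> c) (at z)"
        unfolding has_field_derivative_iff by simp
      then have "((\<lambda>y. c / ((exp (c*(y-z)) - 1) / (y - z))) \<longlongrightarrow> c / c) (at z)"
        using c0 by (intro tendsto_divide tendsto_const) auto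
      moreover have "\<forall>\<^sub>F y in at z. c / ((exp (c*(y-z)) - 1) / (y - z)) = q y"
        by (auto simp: q_def eventually_at_filter)
      ultimately have "(q \<longlongrightarrow> c / c) (at z)"
        by (rule Lim_transform_eventually)
      then have "(q \<longlongrightarrow> q z) (at z)" using c0 by (simp add: q_def)
      then show ?thesis using True by (simp add: isCont_def)
    qed
  qed
  have holq: "q holomorphic_on \<Omega>"
    by (rule no_isolated_singularity[OF contq holq0 op]) auto
  have holHq: "(\<lambda>w. H w * q w) holomorphic_on \<Omega>"
    using holo holq by (intro holomorphic_intros)
  have zint: "z \<in> interior \<Omega>" using zO op by (simp add: interior_open)
  have le: "Re a1 \<le> Re a3" "Im a1 \<le> Im a3" using zbox by (auto simp: in_box_complex_iff)
  have pim: "path_image (rectpath a1 a3) \<subseteq> \<Omega> - {z}"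
    using sub zbox le by (auto simp: path_image_rectpath_cbox_minus_box)
  have "((\<lambda>w. H w * q w / (w - z)) has_contour_integral
          (2*pi*\<i>*winding_number (rectpath a1 a3) z * (H z * q z))) (rectpath a1 a3)"
    by (rule Cauchy_integral_formula_convex_simple[OF cvx holHq zint]) (use pim in auto)
  then have "((\<lambda>w. H w * q w / (w - z)) has_contour_integral (2*pi*\<i>*H z)) (rectpath a1 a3)"
    using winding_number_rectpath[OF zbox] by (simp add: q_def)
  then show ?thesis
  proof (rule has_contour_integral_eq)
    fix w assume "w \<in> path_image (rectpath a1 a3)"
    then have "w \<noteq> z" using pim by auto
    then show "H w * q w / (w - z) = H w * (c / (exp (c*(w-z)) - 1))"
      by (simp add: q_def)
  qed
qed



lemma has_contour_integral_horiz:
  fixes f :: "complex \<Rightarrow> complex"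
  assumes "a < b"
  shows "(f has_contour_integral I) (linepath (Complex a y) (Complex b y)) \<longleftrightarrow>
         ((\<lambda>x. f (Complex x y)) has_integral I) {a..b}"
proof -
  define f' where "f' w = f (w + Complex 0 y)" for w
  have "(f' has_contour_integral I) (linepath (of_real a) (of_real b)) \<longleftrightarrow>
         ((\<lambda>x. f' (of_real x)) has_integral I) {a..b}"
    using has_contour_integral_linepath_Reals_iff[of "of_real a" "of_real b" f' I] assms by simp
  moreover have "(f' has_contour_integral I) (linepath (of_real a) (of_real b)) \<longleftrightarrow>
      (f has_contour_integral I) (linepath (Complex a y) (Complex b y))"
  proof -
    have "\<And>t. f' (linepath (of_real a) (of_real b) t) * (of_real b - of_real a) =
          f (linepath (Complex a y) (Complex b y) t) * (Complex b y - Complex a y)"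
    proof -
      fix t
      have "linepath (of_real a) (of_real b) t + Complex 0 y = linepath (Complex a y) (Complex b y) t"
        by (simp add: linepath_def complex_eq_iff algebra_simps)
      moreover have "(of_real b - of_real a :: complex) = Complex b y - Complex a y"
        by (simp add: complex_eq_iff)
      ultimately show "f' (linepath (of_real a) (of_real b) t) * (of_real b - of_real a) =
          f (linepath (Complex a y) (Complex b y) t) * (Complex b y - Complex a y)"
        by (simp add: f'_def)
    qed
    then show ?thesis by (simp add: has_contour_integral_linepath)
  qed
  moreover have "\<And>x. f' (of_real x) = f (Complex x y)"
  proof -
    fix x
    have "(of_real x :: complex) + Complex 0 y = Complex x y" by (simp add: complex_eq_iff)
    then show "f' (of_real x) = f (Complex x y)" by (simp add: f'_def)
  qed
  ultimately show ?thesis by simp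
qed

lemma contour_integral_horiz:
  fixes f :: "complex \<Rightarrow> complex"
  assumes "a < b" "f contour_integrable_on (linepath (Complex a y) (Complex b y))"
  shows "contour_integral (linepath (Complex a y) (Complex b y)) f = integral {a..b} (\<lambda>x. f (Complex x y))"
  using assms has_contour_integral_horiz[OF assms(1)] 
  by (metis has_contour_integral_integral integral_unique)

lemma int_bound_const:
  fixes g :: "real \<Rightarrow> complex"
  assumes "a \<le> b" "continuous_on {a..b} g" "\<And>x. x \<in> {a..b} \<Longrightarrow> cmod (g x) \<le> B"
  shows "cmod (integral {a..b} g) \<le> (b - a) * B"
proof -
  have "cmod (integral {a..b} g) \<le> integral {a..b} (\<lambda>x. B)"
    by (rule integral_norm_bound_integral) (use assms in \<open>auto intro: integrable_continuous_interval\<close>)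
  then show ?thesis using assms(1) by simp
qed

lemma shift_diff_bound:
  fixes g :: "real \<Rightarrow> complex" and \<kappa> s S B1 B2 :: real
  assumes cont: "continuous_on {s - \<bar>\<kappa>\<bar>..S + \<bar>\<kappa>\<bar>} g" and sS: "s + \<bar>\<kappa>\<bar> \<le> S - \<bar>\<kappa>\<bar>"
    and b1: "\<And>x. x \<in> {s - \<bar>\<kappa>\<bar>..s + \<bar>\<kappa>\<bar>} \<Longrightarrow> cmod (g x) \<le> B1"
    and b2: "\<And>x. x \<in> {S - \<bar>\<kappa>\<bar>..S + \<bar>\<kappa>\<bar>} \<Longrightarrow> cmod (g x) \<le> B2"
  shows "cmod (integral {s..S} (\<lambda>x. g (x - \<kappa>)) - integral {s..S} g) \<le> \<bar>\<kappa>\<bar> * (B1 + B2)"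
proof -
  have sh: "integral {s..S} (\<lambda>x. g (x - \<kappa>)) = integral {s-\<kappa>..S-\<kappa>} g"
    using integral_shift_real_ivl[of "s-\<kappa>" "-\<kappa>" "S-\<kappa>" g] by simp
  have int: "g integrable_on {u..v}" if "s - \<bar>\<kappa>\<bar> \<le> u" "v \<le> S + \<bar>\<kappa>\<bar>" for u v
    by (rule integrable_continuous_interval, rule continuous_on_subset[OF cont]) (use that in auto)
  have ct: "continuous_on {u..v} g" if "s - \<bar>\<kappa>\<bar> \<le> u" "v \<le> S + \<bar>\<kappa>\<bar>" for u v
    by (rule continuous_on_subset[OF cont]) (use that in auto)
  show ?thesis
  proof (cases "\<kappa> \<ge> 0")
    case True
    have e1: "integral {s-\<kappa>..S-\<kappa>} g = integral {s-\<kappa>..s} g + integral {s..S-\<kappa>} g"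
      using Henstock_Kurzweil_Integration.integral_combine[where a="s-\<kappa>" and c="s" and b="S-\<kappa>" and f=g, OF _ _ int[of "s-\<kappa>" "S-\<kappa>"]] True sS by simp
    have e2: "integral {s..S} g = integral {s..S-\<kappa>} g + integral {S-\<kappa>..S} g"
      using Henstock_Kurzweil_Integration.integral_combine[where a="s" and c="S-\<kappa>" and b="S" and f=g, OF _ _ int[of "s" "S"]] True sS by simp
    have n1: "cmod (integral {s-\<kappa>..s} g) \<le> (s - (s-\<kappa>)) * B1"
      by (rule int_bound_const) (use True sS in \<open>auto intro!: ct b1\<close>)
    have n2: "cmod (integral {S-\<kappa>..S} g) \<le> (S - (S-\<kappa>)) * B2"
      by (rule int_bound_const) (use True sS in \<open>auto intro!: ct b2\<close>)
    have "cmod (integral {s..S} (\<lambda>x. g (x - \<kappa>)) - integral {s..S} g)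
        = cmod (integral {s-\<kappa>..s} g - integral {S-\<kappa>..S} g)" by (simp add: sh e1 e2)
    also have "\<dots> \<le> cmod (integral {s-\<kappa>..s} g) + cmod (integral {S-\<kappa>..S} g)" by (rule norm_triangle_ineq4)
    also have "\<dots> \<le> \<bar>\<kappa>\<bar> * (B1 + B2)" using n1 n2 True by (simp add: algebra_simps)
    finally show ?thesis .
  next
    case False
    have e1: "integral {s..S} g = integral {s..s-\<kappa>} g + integral {s-\<kappa>..S} g"
      using Henstock_Kurzweil_Integration.integral_combine[where a="s" and c="s-\<kappa>" and b="S" and f=g, OF _ _ int[of "s" "S"]] False sS by simp
    have e2: "integral {s-\<kappa>..S-\<kappa>} g = integral {s-\<kappa>..S} g + integral {S..S-\<kappa>} g"
      using Henstock_Kurzweil_Integration.integral_combine[where a="s-\<kappa>" and c="S" and b="S-\<kappa>" and f=g, OF _ _ int[of "s-\<kappa>" "S-\<kappa>"]] False sS by simp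
    have n1: "cmod (integral {s..s-\<kappa>} g) \<le> ((s-\<kappa>) - s) * B1"
      by (rule int_bound_const) (use False sS in \<open>auto intro!: ct b1\<close>)
    have n2: "cmod (integral {S..S-\<kappa>} g) \<le> ((S-\<kappa>) - S) * B2"
      by (rule int_bound_const) (use False sS in \<open>auto intro!: ct b2\<close>)
    have "cmod (integral {s..S} (\<lambda>x. g (x - \<kappa>)) - integral {s..S} g)
        = cmod (integral {S..S-\<kappa>} g - integral {s..s-\<kappa>} g)" by (simp add: sh e1 e2)
    also have "\<dots> \<le> cmod (integral {S..S-\<kappa>} g) + cmod (integral {s..s-\<kappa>} g)" by (rule norm_triangle_ineq4)
    also have "\<dots> \<le> \<bar>\<kappa>\<bar> * (B1 + B2)" using n1 n2 False by (simp add: algebra_simps)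
    finally show ?thesis .
  qed
qed



lemma le_eps_lemma:
  fixes x y k :: real
  assumes "\<And>\<eta>. \<eta> > 0 \<Longrightarrow> x \<le> y + \<eta> * k" "k \<ge> 0"
  shows "x \<le> y"
proof (rule ccontr)
  assume "\<not> x \<le> y"
  then have "(x - y) / (2*(k+1)) > 0" using assms(2) by simp
  from assms(1)[OF this] have "x \<le> y + (x-y)/(2*(k+1)) * k" .
  moreover have "(x-y)/(2*(k+1)) * k < x - y"
  proof -
    have "k*y \<le> k*x" using \<open>\<not> x \<le> y\<close> assms(2) by (intro mult_left_mono) auto
    then show ?thesis using \<open>\<not> x \<le> y\<close> assms(2) by (simp add: field_simps)
  qed
  ultimately show False by simp
qed

lemma kern_left:
  fixes \<alpha> \<kappa> s L :: real and w z :: complex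
  defines "c \<equiv> 2*pi*\<i>/Complex \<kappa> (-\<alpha>)"
  defines "la \<equiv> 2*pi*\<alpha>/(\<kappa>^2+\<alpha>^2)" and "\<mu> \<equiv> 2*pi*\<kappa>/(\<kappa>^2+\<alpha>^2)"
  assumes \<alpha>: "\<alpha> > 0" and L: "la * L = ln 2 + \<bar>\<mu>\<bar> * \<alpha>"
    and w: "Re w \<le> t" "-\<alpha> \<le> Im w" "Im w \<le> 0" and z: "-\<alpha> \<le> Im z" "Im z \<le> 0" "t + L \<le> Re z"
  shows "cmod (c / (exp (c*(w-z)) - 1)) \<le> 2 * cmod c * exp (la * t + \<bar>\<mu>\<bar> * \<alpha>) * cmod (exp (c*z))"
proof -
  have lam: "la > 0" using \<alpha> by (simp add: la_def add_nonneg_pos)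
  have Re: "Re (c*u) = - la * Re u - \<mu> * Im u" for u
    using kern_Re[OF \<alpha>, of \<kappa> u] by (simp add: c_def la_def \<mu>_def)
  have m1: "\<bar>\<mu> * (Im w - Im z)\<bar> \<le> \<bar>\<mu>\<bar> * \<alpha>"
    using w z by (auto simp: abs_mult intro!: mult_left_mono)
  have m2: "\<bar>\<mu> * Im w\<bar> \<le> \<bar>\<mu>\<bar> * \<alpha>"
  proof -
    have "\<bar>Im w\<bar> \<le> \<alpha>" using w by auto
    then show ?thesis by (simp add: abs_mult mult_left_mono)
  qed
  have "la * L \<le> la * (Re z - Re w)" using lam w z by (intro mult_left_mono) auto
  then have ReU: "Re (c*(w-z)) \<ge> ln 2"
    using Re[of "w-z"] m1 L by (auto simp: algebra_simps abs_le_iff)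
  define E where "E = exp (c*(w-z))"
  have nE: "cmod E = exp (Re (c*(w-z)))" by (simp add: E_def)
  have E2: "cmod E \<ge> 2" using ReU nE
    by (metis exp_ln exp_le_cancel_iff zero_less_numeral)
  have "cmod (E - 1) \<ge> cmod E - 1" by (metis norm_one norm_triangle_ineq2)
  then have d: "cmod (E - 1) \<ge> cmod E / 2" using E2 by simp
  have "cmod (c / (E - 1)) = cmod c / cmod (E - 1)" by (simp add: norm_divide)
  also have "\<dots> \<le> cmod c / (cmod E / 2)"
    using d E2 by (intro divide_left_mono) (auto intro!: mult_pos_pos)
  also have "\<dots> = 2 * cmod c * exp (- Re (c*(w-z)))"
  proof -
    have "exp (- Re (c*(w-z))) = 1 / cmod E" unfolding nE by (simp only: exp_minus inverse_eq_divide)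
    then show ?thesis by simp
  qed
  also have "- Re (c*(w-z)) = la * Re w + \<mu> * Im w + Re (c*z)"
    using Re[of "w-z"] Re[of z] by (simp add: algebra_simps)
  also have "2 * cmod c * exp (la * Re w + \<mu> * Im w + Re (c*z)) \<le>
             2 * cmod c * exp (la * t + \<bar>\<mu>\<bar> * \<alpha> + Re (c*z))"
  proof -
    have "la * Re w \<le> la * t" using w lam by (intro mult_left_mono) auto
    then show ?thesis using m2 by (intro mult_left_mono) (auto simp: abs_le_iff)
  qed
  also have "\<dots> = 2 * cmod c * exp (la * t + \<bar>\<mu>\<bar> * \<alpha>) * cmod (exp (c*z))"
    by (simp add: exp_add)
  finally show ?thesis by (simp add: E_def)
qed

lemma kern_right:
  fixes \<alpha> \<kappa> L :: real and w z :: complex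
  defines "c \<equiv> 2*pi*\<i>/Complex \<kappa> (-\<alpha>)"
  defines "la \<equiv> 2*pi*\<alpha>/(\<kappa>^2+\<alpha>^2)" and "\<mu> \<equiv> 2*pi*\<kappa>/(\<kappa>^2+\<alpha>^2)"
  assumes \<alpha>: "\<alpha> > 0" and L: "la * L = ln 2 + \<bar>\<mu>\<bar> * \<alpha>"
    and w: "-\<alpha> \<le> Im w" "Im w \<le> 0" and z: "-\<alpha> \<le> Im z" "Im z \<le> 0" "Re z + L \<le> Re w"
  shows "cmod (c / (exp (c*(w-z)) - 1)) \<le> 2 * cmod c"
proof -
  have lam: "la > 0" using \<alpha> by (simp add: la_def add_nonneg_pos)
  have Re: "Re (c*u) = - la * Re u - \<mu> * Im u" for u
    using kern_Re[OF \<alpha>, of \<kappa> u] by (simp add: c_def la_def \<mu>_def)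
  have m1: "\<bar>\<mu> * (Im w - Im z)\<bar> \<le> \<bar>\<mu>\<bar> * \<alpha>"
    using w z by (auto simp: abs_mult intro!: mult_left_mono)
  have "la * L \<le> la * (Re w - Re z)" using lam w z by (intro mult_left_mono) auto
  then have ReU: "Re (c*(w-z)) \<le> - ln 2"
    using Re[of "w-z"] m1 L by (auto simp: algebra_simps abs_le_iff)
  define E where "E = exp (c*(w-z))"
  have nE: "cmod E = exp (Re (c*(w-z)))" by (simp add: E_def)
  have "exp (Re (c*(w-z))) \<le> exp (- ln 2)" using ReU by simp
  then have E2: "cmod E \<le> 1/2" using nE by (simp add: exp_minus)
  have "cmod (E - 1) \<ge> 1 - cmod E" by (metis norm_minus_commute norm_one norm_triangle_ineq2)
  then have d: "cmod (E - 1) \<ge> 1/2" using E2 by simp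
  have "cmod (c / (E - 1)) = cmod c / cmod (E - 1)" by (simp add: norm_divide)
  also have "\<dots> \<le> cmod c / (1/2)"
    using d by (intro divide_left_mono) auto
  finally show ?thesis by (simp add: E_def)
qed



lemma core:
  fixes \<alpha> \<kappa> A B0 :: real and H :: "complex \<Rightarrow> complex" and hm hp :: "real \<Rightarrow> complex"
  defines "c \<equiv> 2*pi*\<i>/Complex \<kappa> (-\<alpha>)"
  assumes \<alpha>: "\<alpha> > 0"
  and holo: "H holomorphic_on {w. -\<alpha> < Im w \<and> Im w < 0 \<and> A < Re w}"
  and bdd: "\<And>w. -\<alpha> < Im w \<Longrightarrow> Im w < 0 \<Longrightarrow> A < Re w \<Longrightarrow> cmod (H w) \<le> B0"
  and lim: "\<And>e. e > 0 \<Longrightarrow> \<exists>R. \<forall>w. -\<alpha> < Im w \<longrightarrow> Im w < 0 \<longrightarrow> R \<le> Re w \<longrightarrow> cmod (H w) \<le> e"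
  and low: "\<And>a b. A < a \<Longrightarrow> a \<le> b \<Longrightarrow>
      ((\<lambda>y. integral {a..b} (\<lambda>x. cmod (H (Complex x (-y)) - hm x))) \<longlongrightarrow> 0) (at_right 0)"
  and lowi: "\<And>a b y. A < a \<Longrightarrow> 0 < y \<Longrightarrow> y < \<alpha> \<Longrightarrow>
      (\<lambda>x. cmod (H (Complex x (-y)) - hm x)) integrable_on {a..b}"
  and up: "\<And>a b. A < a \<Longrightarrow> a \<le> b \<Longrightarrow>
      ((\<lambda>y. integral {a..b} (\<lambda>x. cmod (H (Complex x (-\<alpha>+y)) - hp x))) \<longlongrightarrow> 0) (at_right 0)"
  and upi: "\<And>a b y. A < a \<Longrightarrow> 0 < y \<Longrightarrow> y < \<alpha> \<Longrightarrow>
      (\<lambda>x. cmod (H (Complex x (-\<alpha>+y)) - hp x)) integrable_on {a..b}"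
  and jump: "negligible {x. A < x \<and> hp x \<noteq> hm (x - \<kappa>)}"
  shows "\<exists>C R. \<forall>z. -\<alpha> < Im z \<longrightarrow> Im z < 0 \<longrightarrow> R \<le> Re z \<longrightarrow> cmod (H z) \<le> C * cmod (exp (c * z))"
proof -
  define \<Omega> where "\<Omega> = {w. -\<alpha> < Im w \<and> Im w < 0 \<and> A < Re w}"
  define B where "B = max B0 0"
  define la where "la = 2*pi*\<alpha>/(\<kappa>^2+\<alpha>^2)"
  define mu where "mu = 2*pi*\<kappa>/(\<kappa>^2+\<alpha>^2)"
  define Kf where "Kf u = c / (exp (c*u) - 1)" for u
  have lam: "la > 0" using \<alpha> by (simp add: la_def add_nonneg_pos)
  define s where "s = A + \<bar>\<kappa>\<bar> + 1"
  define L where "L = (ln 2 + \<bar>mu\<bar> * \<alpha>) / la"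
  have LL: "la * L = ln 2 + \<bar>mu\<bar> * \<alpha>" using lam by (simp add: L_def)
  have L0: "L > 0" using lam \<alpha> by (simp add: L_def add_pos_nonneg)
  define R where "R = s + \<bar>\<kappa>\<bar> + L + 1"
  define C0 where "C0 = 2 * cmod c * exp (la * (s + \<bar>\<kappa>\<bar>) + \<bar>mu\<bar> * \<alpha>)"
  have B0: "B \<ge> 0" by (simp add: B_def)
  have C00: "C0 \<ge> 0" by (simp add: C0_def)
  have bddB: "cmod (H w) \<le> B" if "-\<alpha> < Im w" "Im w < 0" "A < Re w" for w
    using bdd[OF that] by (simp add: B_def)
  have Kleft: "cmod (Kf (w - z)) \<le> C0 * cmod (exp (c*z))"
    if "Re w \<le> s + \<bar>\<kappa>\<bar>" "-\<alpha> \<le> Im w" "Im w \<le> 0" "-\<alpha> \<le> Im z" "Im z \<le> 0" "R \<le> Re z" for w z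
    using kern_left[OF \<alpha>, of \<kappa> L "w" "s + \<bar>\<kappa>\<bar>" z] that LL L0
    unfolding Kf_def C0_def c_def la_def mu_def R_def by auto
  have Kright: "cmod (Kf (w - z)) \<le> 2 * cmod c"
    if "-\<alpha> \<le> Im w" "Im w \<le> 0" "-\<alpha> \<le> Im z" "Im z \<le> 0" "Re z + L \<le> Re w" for w z
    using kern_right[OF \<alpha>, of \<kappa> L w z] that LL
    unfolding Kf_def c_def la_def mu_def by auto
  have Kper: "Kf (u + Complex \<kappa> (-\<alpha>)) = Kf u" for u
    using kern_period[OF \<alpha>, of \<kappa> u] by (simp add: Kf_def c_def)
  have opO: "open \<Omega>" unfolding \<Omega>_def
    by (auto intro!: open_Collect_conj open_Collect_less continuous_intros)
  have cvO: "convex \<Omega>"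
  proof -
    have "\<Omega> = {w. Im w > -\<alpha>} \<inter> {w. Im w < 0} \<inter> {w. Re w > A}" by (auto simp: \<Omega>_def)
    then show ?thesis
      by (metis convex_Int convex_halfspace_Im_gt convex_halfspace_Im_lt convex_halfspace_Re_gt)
  qed
  have holO: "H holomorphic_on \<Omega>" using holo by (simp add: \<Omega>_def)
  have key: "2*pi * cmod (H z) \<le> (\<alpha> + \<bar>\<kappa>\<bar>) * B * C0 * cmod (exp (c*z))
               + \<eta> * (1 + 2*cmod c*\<bar>\<kappa>\<bar> + 2*cmod c*\<alpha>)"
    if z: "-\<alpha> < Im z" "Im z < 0" "R \<le> Re z" and \<eta>: "\<eta> > 0" for z \<eta>
  proof -
    obtain R1 where R1: "\<And>w. -\<alpha> < Im w \<Longrightarrow> Im w < 0 \<Longrightarrow> R1 \<le> Re w \<Longrightarrow> cmod (H w) \<le> \<eta>"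
      using lim[OF \<eta>] by blast
    define S where "S = max (R1 + \<bar>\<kappa>\<bar>) (Re z + \<bar>\<kappa>\<bar> + L) + 1"
    have sR: "s + \<bar>\<kappa>\<bar> + L + 1 \<le> Re z" using z by (simp add: R_def)
    have SzL: "Re z + L \<le> S - \<bar>\<kappa>\<bar>" by (simp add: S_def)
    have SR1: "R1 \<le> S - \<bar>\<kappa>\<bar>" by (simp add: S_def)
    have sS: "s + \<bar>\<kappa>\<bar> \<le> S - \<bar>\<kappa>\<bar>" using sR SzL L0 by linarith
    have sA: "A < s - \<bar>\<kappa>\<bar>" by (simp add: s_def)
    have zs: "s < Re z" "Re z < S" using sR SzL L0 by linarith+
    define \<epsilon>0 where "\<epsilon>0 = min (- Im z) (Im z + \<alpha>) / 2"
    have e0: "\<epsilon>0 > 0" "\<epsilon>0 < - Im z" "\<epsilon>0 < Im z + \<alpha>" "2*\<epsilon>0 \<le> - Im z" "2*\<epsilon>0 \<le> Im z + \<alpha>"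
      using z by (auto simp: \<epsilon>0_def)
    define Q where "Q = cbox (Complex (s - \<bar>\<kappa>\<bar> - Re z) (-\<epsilon>0 - Im z)) (Complex (S + \<bar>\<kappa>\<bar> - Re z) (\<epsilon>0 - Im z))"
    have cQ: "compact Q" by (simp add: Q_def compact_cbox)
    have KQ: "continuous_on Q Kf"
    proof -
      have "exp (c*u) - 1 \<noteq> 0" if "u \<in> Q" for u
      proof -
        have "0 < Im u" "Im u < \<alpha>" using that e0 by (auto simp: Q_def in_cbox_complex_iff)
        moreover have "u \<noteq> 0" using \<open>0 < Im u\<close> by auto
        ultimately have "exp (2*pi*\<i>/Complex \<kappa> (-\<alpha>) * u) \<noteq> 1"
          using kern_exp_ne_1[OF \<alpha>, of u \<kappa>] by auto
        then show ?thesis by (simp add: c_def)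
      qed
      then show ?thesis unfolding Kf_def by (intro continuous_intros) auto
    qed
    obtain K1 where K1: "K1 > 0" "\<And>u. u \<in> Q \<Longrightarrow> cmod (Kf u) \<le> K1"
      using compact_imp_bounded[OF compact_continuous_image[OF KQ cQ]] by (auto simp: bounded_pos)
    define \<eta>' where "\<eta>' = \<eta> / (3 * (B * (S - s) + 1))"
    have \<eta>'0: "\<eta>' > 0" using \<eta> B0 zs by (simp add: \<eta>'_def add_nonneg_pos)
    obtain d where d: "d > 0" "\<And>u u'. u \<in> Q \<Longrightarrow> u' \<in> Q \<Longrightarrow> dist u' u < d \<Longrightarrow> dist (Kf u') (Kf u) < \<eta>'"
      using compact_uniformly_continuous[OF KQ cQ] \<eta>'0 unfolding uniformly_continuous_on_def by metis
    define \<delta>1 where "\<delta>1 = \<eta> / (3 * (K1 + 1))"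
    have \<delta>10: "\<delta>1 > 0" using \<eta> K1 by (simp add: \<delta>1_def)
    have ev1: "\<forall>\<^sub>F y in at_right 0. integral {s..S} (\<lambda>x. cmod (H (Complex x (-\<alpha>+y)) - hp x)) < \<delta>1"
      using order_tendstoD(2)[OF up[of s S] \<delta>10] sA zs by auto
    have ev2: "\<forall>\<^sub>F y in at_right 0. integral {s-\<kappa>..S-\<kappa>} (\<lambda>x. cmod (H (Complex x (-y)) - hm x)) < \<delta>1"
      using order_tendstoD(2)[OF low[of "s-\<kappa>" "S-\<kappa>"] \<delta>10] sA zs by auto
    have ev3: "\<forall>\<^sub>F y in at_right 0. y < min (min \<epsilon>0 (d/2)) (\<alpha>/2)"
      unfolding eventually_at_right_field using e0 d \<alpha>
      by (intro exI[of _ "min (min \<epsilon>0 (d/2)) (\<alpha>/2)"]) auto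
    from eventually_conj[OF ev1 eventually_conj[OF ev2 ev3]]
    obtain bb where bb: "bb > 0" "\<And>y. 0 < y \<Longrightarrow> y < bb \<Longrightarrow>
        integral {s..S} (\<lambda>x. cmod (H (Complex x (-\<alpha>+y)) - hp x)) < \<delta>1 \<and>
        integral {s-\<kappa>..S-\<kappa>} (\<lambda>x. cmod (H (Complex x (-y)) - hm x)) < \<delta>1 \<and>
        y < min (min \<epsilon>0 (d/2)) (\<alpha>/2)"
      unfolding eventually_at_right_field by auto
    define \<epsilon> where "\<epsilon> = bb / 2"
    have \<epsilon>: "\<epsilon> > 0" "\<epsilon> < \<epsilon>0" "\<epsilon> < d/2" "\<epsilon> < \<alpha>/2"
      and i1: "integral {s..S} (\<lambda>x. cmod (H (Complex x (-\<alpha>+\<epsilon>)) - hp x)) < \<delta>1"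
      and i2: "integral {s-\<kappa>..S-\<kappa>} (\<lambda>x. cmod (H (Complex x (-\<epsilon>)) - hm x)) < \<delta>1"
      using bb(2)[of \<epsilon>] bb(1) by (auto simp: \<epsilon>_def)
    have contC: "continuous_on T (\<lambda>x. Complex x y)" for T y
    proof -
      have "continuous_on T (\<lambda>x. of_real x + \<i> * of_real y)" by (intro continuous_intros)
      moreover have "(\<lambda>x. of_real x + \<i> * of_real y) = (\<lambda>x. Complex x y)" by (auto simp: complex_eq_iff)
      ultimately show ?thesis by metis
    qed
    have zO: "z \<in> \<Omega>" using z zs sA by (auto simp: \<Omega>_def)
    have width: "\<bar>Im (w - z)\<bar> < \<alpha>" if "w \<in> \<Omega>" for w using that z by (auto simp: \<Omega>_def)
    define f where "f w = H w * Kf (w - z)" for w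
    define a1 where "a1 = Complex s (-\<alpha>+\<epsilon>)"
    define a2 where "a2 = Complex S (-\<alpha>+\<epsilon>)"
    define a3 where "a3 = Complex S (-\<epsilon>)"
    define a4 where "a4 = Complex s (-\<epsilon>)"
    have holf: "f holomorphic_on (\<Omega> - {z})"
    proof -
      have "exp (c*(w-z)) - 1 \<noteq> 0" if "w \<in> \<Omega> - {z}" for w
      proof -
        have "exp (2*pi*\<i>/Complex \<kappa> (-\<alpha>) * (w-z)) \<noteq> 1"
          using kern_exp_ne_1[OF \<alpha>, of "w-z" \<kappa>] width[of w] that by auto
        then show ?thesis by (simp add: c_def)
      qed
      then show ?thesis unfolding f_def Kf_def
        by (intro holomorphic_intros holomorphic_on_subset[OF holO]) auto
    qed
    have contf: "continuous_on (\<Omega> - {z}) f" by (rule holomorphic_on_imp_continuous_on[OF holf])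
    have zbox: "z \<in> box a1 a3" using zs z \<epsilon> e0 by (auto simp: a1_def a3_def in_box_complex_iff)
    have sub: "cbox a1 a3 \<subseteq> \<Omega>" using sA \<epsilon> \<alpha> by (auto simp: a1_def a3_def in_cbox_complex_iff \<Omega>_def)
    have cauchy: "(f has_contour_integral (2*pi*\<i>*H z)) (rectpath a1 a3)"
      using cauchy_kernel_rect[where \<kappa>=\<kappa>, OF \<alpha> cvO opO holO zO width zbox sub]
      unfolding f_def Kf_def c_def by simp
    have seg12: "closed_segment a1 a2 = {w. Im w = -\<alpha>+\<epsilon> \<and> Re w \<in> {s..S}}"
      using zs by (simp add: a1_def a2_def closed_segment_same_Im closed_segment_eq_real_ivl)
    have seg23: "closed_segment a2 a3 = {w. Re w = S \<and> Im w \<in> {-\<alpha>+\<epsilon>..-\<epsilon>}}"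
      using \<epsilon> by (simp add: a2_def a3_def closed_segment_same_Re closed_segment_eq_real_ivl)
    have seg43: "closed_segment a4 a3 = {w. Im w = -\<epsilon> \<and> Re w \<in> {s..S}}"
      using zs by (simp add: a4_def a3_def closed_segment_same_Im closed_segment_eq_real_ivl)
    have seg41: "closed_segment a4 a1 = {w. Re w = s \<and> Im w \<in> {-\<alpha>+\<epsilon>..-\<epsilon>}}"
      using \<epsilon> by (simp add: a4_def a1_def closed_segment_same_Re closed_segment_eq_real_ivl)
    have sub12: "closed_segment a1 a2 \<subseteq> \<Omega> - {z}" using seg12 sA \<epsilon> e0 by (auto simp: \<Omega>_def)
    have sub23: "closed_segment a2 a3 \<subseteq> \<Omega> - {z}" using seg23 sA \<epsilon> zs sS by (auto simp: \<Omega>_def)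
    have sub43: "closed_segment a4 a3 \<subseteq> \<Omega> - {z}" using seg43 sA \<epsilon> e0 by (auto simp: \<Omega>_def)
    have sub41: "closed_segment a4 a1 \<subseteq> \<Omega> - {z}" using seg41 sA \<epsilon> zs by (auto simp: \<Omega>_def)
    have c12: "continuous_on (closed_segment a1 a2) f" by (rule continuous_on_subset[OF contf sub12])
    have c23: "continuous_on (closed_segment a2 a3) f" by (rule continuous_on_subset[OF contf sub23])
    have c43: "continuous_on (closed_segment a4 a3) f" by (rule continuous_on_subset[OF contf sub43])
    have c34: "continuous_on (closed_segment a3 a4) f" using c43 by (simp add: closed_segment_commute)
    have c41: "continuous_on (closed_segment a4 a1) f" by (rule continuous_on_subset[OF contf sub41])
    define I1 where "I1 = contour_integral (linepath a1 a2) f"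
    define I2 where "I2 = contour_integral (linepath a2 a3) f"
    define I3 where "I3 = contour_integral (linepath a3 a4) f"
    define I4 where "I4 = contour_integral (linepath a4 a1) f"
    have h1: "(f has_contour_integral I1) (linepath a1 a2)"
      unfolding I1_def by (rule has_contour_integral_integral, rule contour_integrable_continuous_linepath[OF c12])
    have h2: "(f has_contour_integral I2) (linepath a2 a3)"
      unfolding I2_def by (rule has_contour_integral_integral, rule contour_integrable_continuous_linepath[OF c23])
    have h3: "(f has_contour_integral I3) (linepath a3 a4)"
      unfolding I3_def by (rule has_contour_integral_integral, rule contour_integrable_continuous_linepath[OF c34])
    have h4: "(f has_contour_integral I4) (linepath a4 a1)"
      unfolding I4_def by (rule has_contour_integral_integral, rule contour_integrable_continuous_linepath[OF c41])
    have rp: "rectpath a1 a3 = linepath a1 a2 +++ linepath a2 a3 +++ linepath a3 a4 +++ linepath a4 a1"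
      by (simp add: rectpath_def Let_def a1_def a2_def a3_def a4_def)
    have "(f has_contour_integral (I1 + (I2 + (I3 + I4)))) (rectpath a1 a3)"
      unfolding rp
      by (intro has_contour_integral_join h1 h2 h3 h4 valid_path_join valid_path_linepath) auto
    then have sum: "2*pi*\<i>*H z = I1 + (I2 + (I3 + I4))"
      using cauchy has_contour_integral_unique by blast
    define F1 where "F1 x = f (Complex x (-\<alpha>+\<epsilon>))" for x
    define g where "g x = f (Complex x (-\<epsilon>))" for x
    have I1e: "I1 = integral {s..S} F1"
      unfolding I1_def F1_def a1_def a2_def
      by (rule contour_integral_horiz) (use zs contour_integrable_continuous_linepath[OF c12] in \<open>auto simp: a1_def a2_def\<close>)
    have I3e: "I3 = - integral {s..S} g"
    proof -
      have "I3 = - contour_integral (linepath a4 a3) f"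
        unfolding I3_def by (rule contour_integral_reverse_linepath[OF c34])
      also have "contour_integral (linepath a4 a3) f = integral {s..S} g"
        unfolding g_def a4_def a3_def
        by (rule contour_integral_horiz) (use zs contour_integrable_continuous_linepath[OF c43] in \<open>auto simp: a4_def a3_def\<close>)
      finally show ?thesis .
    qed
    define E where "E = cmod (exp (c*z))"
    have nI2: "cmod I2 \<le> \<eta> * (2 * cmod c) * \<alpha>"
    proof -
      have "cmod I2 \<le> \<eta> * (2 * cmod c) * cmod (a3 - a2)"
      proof (rule has_contour_integral_bound_linepath[OF h2])
        show "0 \<le> \<eta> * (2 * cmod c)" using \<eta> by simp
        fix w assume "w \<in> closed_segment a2 a3"
        then have w: "Re w = S" "-\<alpha>+\<epsilon> \<le> Im w" "Im w \<le> -\<epsilon>" using seg23 by auto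
        have "cmod (H w) \<le> \<eta>" using R1[of w] w \<epsilon> SR1 by auto
        moreover have "cmod (Kf (w - z)) \<le> 2 * cmod c" using Kright[of w z] w \<epsilon> z SzL by auto
        ultimately show "cmod (f w) \<le> \<eta> * (2 * cmod c)"
          unfolding f_def norm_mult using \<eta> by (intro mult_mono) auto
      qed
      also have "cmod (a3 - a2) = \<alpha> - 2*\<epsilon>" using \<epsilon> by (simp add: a3_def a2_def cmod_def)
      finally show ?thesis using \<eta> \<epsilon> by (smt (verit) mult_left_mono norm_ge_zero zero_le_mult_iff)
    qed
    have nI4: "cmod I4 \<le> B * C0 * E * \<alpha>"
    proof -
      have "cmod I4 \<le> (B * C0 * E) * cmod (a1 - a4)"
      proof (rule has_contour_integral_bound_linepath[OF h4])
        show "0 \<le> B * C0 * E" using B0 C00 by (simp add: E_def)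
        fix w assume "w \<in> closed_segment a4 a1"
        then have w: "Re w = s" "-\<alpha>+\<epsilon> \<le> Im w" "Im w \<le> -\<epsilon>" using seg41 by auto
        have "cmod (H w) \<le> B" using bddB[of w] w \<epsilon> sA by auto
        moreover have "cmod (Kf (w - z)) \<le> C0 * E" using Kleft[of w z] w \<epsilon> z unfolding E_def by auto
        ultimately show "cmod (f w) \<le> B * C0 * E"
          unfolding f_def norm_mult mult.assoc by (intro mult_mono) (auto simp: B0)
      qed
      also have "cmod (a1 - a4) = \<alpha> - 2*\<epsilon>" using \<epsilon> by (simp add: a1_def a4_def cmod_def)
      finally show ?thesis using B0 C00 \<epsilon> unfolding E_def
        by (smt (verit) mult_left_mono norm_ge_zero zero_le_mult_iff)
    qed
    have inO: "Complex x y \<in> \<Omega> - {z}" if "A < x" "-\<alpha> < y" "y < 0" "y \<noteq> Im z" for x y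
      using that by (auto simp: \<Omega>_def)
    have contF1: "continuous_on {s..S} F1"
      unfolding F1_def
      by (rule continuous_on_compose2[OF contf contC]) (use sA \<epsilon> e0 z in \<open>auto simp: \<Omega>_def\<close>)
    have contg: "continuous_on {s - \<bar>\<kappa>\<bar>..S + \<bar>\<kappa>\<bar>} g"
      unfolding g_def
      by (rule continuous_on_compose2[OF contf contC]) (use sA \<epsilon> e0 z in \<open>auto simp: \<Omega>_def\<close>)
    have contgs: "continuous_on {s..S} (\<lambda>x. g (x - \<kappa>))"
    proof -
      have "continuous_on {s..S} (\<lambda>x. x - \<kappa>)" by (intro continuous_intros)
      moreover have "(\<lambda>x. x - \<kappa>) ` {s..S} \<subseteq> {s - \<bar>\<kappa>\<bar>..S + \<bar>\<kappa>\<bar>}" by auto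
      ultimately show ?thesis using continuous_on_compose2[OF contg] by blast
    qed
    have second: "cmod (integral {s..S} (\<lambda>x. g (x - \<kappa>)) - integral {s..S} g)
        \<le> \<bar>\<kappa>\<bar> * (B * C0 * E + \<eta> * (2 * cmod c))"
    proof (rule shift_diff_bound[OF contg sS])
      fix x assume x: "x \<in> {s - \<bar>\<kappa>\<bar>..s + \<bar>\<kappa>\<bar>}"
      have "cmod (H (Complex x (-\<epsilon>))) \<le> B" using bddB[of "Complex x (-\<epsilon>)"] x \<epsilon> sA by auto
      moreover have "cmod (Kf (Complex x (-\<epsilon>) - z)) \<le> C0 * E"
        using Kleft[of "Complex x (-\<epsilon>)" z] x \<epsilon> z unfolding E_def by auto
      ultimately show "cmod (g x) \<le> B * C0 * E"
        unfolding g_def f_def norm_mult mult.assoc by (intro mult_mono) (auto simp: B0)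
    next
      fix x assume x: "x \<in> {S - \<bar>\<kappa>\<bar>..S + \<bar>\<kappa>\<bar>}"
      have "cmod (H (Complex x (-\<epsilon>))) \<le> \<eta>" using R1[of "Complex x (-\<epsilon>)"] x \<epsilon> SR1 by auto
      moreover have "cmod (Kf (Complex x (-\<epsilon>) - z)) \<le> 2 * cmod c"
        using Kright[of "Complex x (-\<epsilon>)" z] x \<epsilon> z SzL by auto
      ultimately show "cmod (g x) \<le> \<eta> * (2 * cmod c)"
        unfolding g_def f_def norm_mult using \<eta> by (intro mult_mono) auto
    qed
    define T1 where "T1 x = cmod (H (Complex x (-\<alpha>+\<epsilon>)) - hp x)" for x
    define T2 where "T2 x = cmod (hp x - hm (x - \<kappa>))" for x
    define T3 where "T3 x = cmod (H (Complex (x - \<kappa>) (-\<epsilon>)) - hm (x - \<kappa>))" for x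
    have T1i: "(T1 has_integral integral {s..S} T1) {s..S}"
      unfolding T1_def using upi[of s \<epsilon> S] sA \<epsilon> by (auto intro!: integrable_integral)
    have T3int: "T3 integrable_on {s..S}"
    proof -
      have "(\<lambda>x. cmod (H (Complex x (-\<epsilon>)) - hm x)) integrable_on {s-\<kappa>..S-\<kappa>}"
        using lowi[of "s-\<kappa>" \<epsilon> "S-\<kappa>"] sA \<epsilon> by auto
      from integrable_shift_real_ivl[OF this, of "-\<kappa>"] show ?thesis unfolding T3_def by simp
    qed
    have T3e: "integral {s..S} T3 = integral {s-\<kappa>..S-\<kappa>} (\<lambda>x. cmod (H (Complex x (-\<epsilon>)) - hm x))"
      using integral_shift_real_ivl[where f="\<lambda>x. cmod (H (Complex x (-\<epsilon>)) - hm x)" and a="s-\<kappa>" and c="-\<kappa>" and b="S-\<kappa>"]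
      unfolding T3_def by simp
    have T3i: "(T3 has_integral integral {s..S} T3) {s..S}" using T3int by (rule integrable_integral)
    have T2i: "(T2 has_integral 0) {s..S}"
    proof -
      have z0: "((\<lambda>x. 0::real) has_integral 0) {s..S}" by simp
      have gf: "T2 x = 0" if "x \<in> {s..S} - {x. A < x \<and> hp x \<noteq> hm (x - \<kappa>)}" for x
        using that sA by (auto simp: T2_def)
      show ?thesis by (rule has_integral_spike[OF jump gf z0])
    qed
    define bnd where "bnd x = K1 * (T1 x + T2 x + T3 x) + B * \<eta>'" for x
    have ci: "((\<lambda>x. B * \<eta>') has_integral ((S - s) * (B * \<eta>'))) {s..S}"
      using has_integral_const_real[of "B * \<eta>'" s S] zs by simp
    have bndi: "(bnd has_integral (K1 * (integral {s..S} T1 + 0 + integral {s..S} T3) + (S - s) * (B * \<eta>'))) {s..S}"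
      unfolding bnd_def
      by (intro has_integral_add has_integral_mult_right T1i T2i T3i ci)
    have pw: "cmod (F1 x - g (x - \<kappa>)) \<le> bnd x" if x: "x \<in> {s..S}" for x
    proof -
      define w1 where "w1 = Complex x (-\<alpha>+\<epsilon>)"
      define w2 where "w2 = Complex (x-\<kappa>) (-\<epsilon>)"
      define u1 where "u1 = Complex (x-\<kappa>) \<epsilon> - z"
      define u2 where "u2 = w2 - z"
      have "w1 - z = u1 + Complex \<kappa> (-\<alpha>)" by (simp add: w1_def u1_def complex_eq_iff)
      then have K1e: "Kf (w1 - z) = Kf u1" by (simp add: Kper)
      have F1e: "F1 x = H w1 * Kf u1" using K1e by (simp add: F1_def f_def w1_def)
      have ge: "g (x - \<kappa>) = H w2 * Kf u2" by (simp add: g_def f_def w2_def u2_def)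
      have u1Q: "u1 \<in> Q" using x \<epsilon> e0 by (auto simp: u1_def Q_def in_cbox_complex_iff)
      have u2Q: "u2 \<in> Q" using x \<epsilon> e0 by (auto simp: u2_def w2_def Q_def in_cbox_complex_iff)
      have "u1 - u2 = Complex 0 (2*\<epsilon>)" by (simp add: u1_def u2_def w2_def complex_eq_iff)
      moreover have "sqrt (4 * \<epsilon>\<^sup>2) = 2 * \<epsilon>"
      proof -
        have "4 * \<epsilon>\<^sup>2 = (2*\<epsilon>)\<^sup>2" by (simp add: power2_eq_square)
        then have "sqrt (4 * \<epsilon>\<^sup>2) = \<bar>2*\<epsilon>\<bar>" by (simp only: real_sqrt_abs)
        then show ?thesis using \<epsilon> by simp
      qed
      ultimately have "dist u1 u2 = 2*\<epsilon>" using \<epsilon> by (simp add: dist_norm cmod_def)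
      then have dK: "cmod (Kf u1 - Kf u2) < \<eta>'" using d(2)[OF u2Q u1Q] \<epsilon> by (simp add: dist_norm)
      have Ku1: "cmod (Kf u1) \<le> K1" using K1(2)[OF u1Q] .
      have Hw2: "cmod (H w2) \<le> B" using bddB[of w2] x \<epsilon> sA by (auto simp: w2_def)
      have dH: "cmod (H w1 - H w2) \<le> T1 x + T2 x + T3 x"
      proof -
        have "H w1 - H w2 = (H w1 - hp x) + (hp x - hm (x - \<kappa>)) - (H w2 - hm (x - \<kappa>))" by simp
        also have "cmod \<dots> \<le> cmod ((H w1 - hp x) + (hp x - hm (x - \<kappa>))) + cmod (H w2 - hm (x - \<kappa>))"
          by (rule norm_triangle_ineq4)
        also have "\<dots> \<le> T1 x + T2 x + T3 x" unfolding T1_def T2_def T3_def w1_def w2_def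
          using norm_triangle_ineq by (smt (verit))
        finally show ?thesis .
      qed
      have "F1 x - g (x - \<kappa>) = (H w1 - H w2) * Kf u1 + H w2 * (Kf u1 - Kf u2)"
        by (simp add: F1e ge algebra_simps)
      also have "cmod \<dots> \<le> cmod (H w1 - H w2) * cmod (Kf u1) + cmod (H w2) * cmod (Kf u1 - Kf u2)"
        by (metis norm_mult norm_triangle_ineq)
      also have "\<dots> \<le> (T1 x + T2 x + T3 x) * K1 + B * \<eta>'"
        by (intro add_mono mult_mono dH Ku1 Hw2 less_imp_le[OF dK]) (auto simp: B0 T1_def T2_def T3_def)
      finally show ?thesis by (simp add: bnd_def algebra_simps)
    qed
    have first: "cmod (integral {s..S} F1 - integral {s..S} (\<lambda>x. g (x - \<kappa>))) \<le> \<eta>"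
    proof -
      have "integral {s..S} F1 - integral {s..S} (\<lambda>x. g (x - \<kappa>)) = integral {s..S} (\<lambda>x. F1 x - g (x - \<kappa>))"
        by (rule integral_diff[symmetric]) (auto intro: integrable_continuous_interval contF1 contgs)
      also have "cmod \<dots> \<le> integral {s..S} bnd"
        by (rule integral_norm_bound_integral)
          (use pw bndi contF1 contgs in \<open>auto intro!: integrable_continuous_interval continuous_intros simp: integrable_on_def\<close>)
      also have "integral {s..S} bnd = K1 * (integral {s..S} T1 + integral {s..S} T3) + (S - s) * (B * \<eta>')"
        using integral_unique[OF bndi] zs by simp
      also have "\<dots> \<le> K1 * (2 * \<delta>1) + (S - s) * (B * \<eta>')"
      proof -
        have iT1: "integral {s..S} T1 < \<delta>1" using i1 unfolding T1_def by simp
        have "integral {s..S} T1 + integral {s..S} T3 \<le> 2 * \<delta>1" using iT1 i2 T3e by simp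
        then show ?thesis using K1(1) by (simp add: mult_left_mono)
      qed
      also have "\<dots> \<le> \<eta>"
      proof -
        have a: "K1 * (2 * \<delta>1) \<le> 2 * \<eta> / 3" using K1 \<eta> by (simp add: \<delta>1_def field_simps)
        have X0: "B * (S - s) \<ge> 0" using B0 zs by simp
        have "(S - s) * (B * \<eta>') = (B * (S - s)) / (B * (S - s) + 1) * (\<eta> / 3)"
          using X0 by (simp add: \<eta>'_def field_simps)
        also have "\<dots> \<le> 1 * (\<eta> / 3)"
          using X0 \<eta> by (intro mult_right_mono) auto
        finally have b: "(S - s) * (B * \<eta>') \<le> \<eta> / 3" by simp
        show ?thesis using a b by simp
      qed
      finally show ?thesis .
    qed
    have "2*pi * cmod (H z) = cmod (2*pi*\<i>*H z)" by (simp add: norm_mult)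
    also have "\<dots> = cmod (I1 + (I2 + (I3 + I4)))" by (simp only: sum)
    also have "\<dots> = cmod ((integral {s..S} F1 - integral {s..S} (\<lambda>x. g (x - \<kappa>)))
                + (integral {s..S} (\<lambda>x. g (x - \<kappa>)) - integral {s..S} g) + I2 + I4)"
      by (simp add: I1e I3e algebra_simps)
    also have "\<dots> \<le> \<eta> + \<bar>\<kappa>\<bar> * (B * C0 * E + \<eta> * (2 * cmod c)) + \<eta> * (2 * cmod c) * \<alpha> + B * C0 * E * \<alpha>"
      using first second nI2 nI4 norm_triangle_ineq by (smt (verit))
    also have "\<dots> = (\<alpha> + \<bar>\<kappa>\<bar>) * B * C0 * E + \<eta> * (1 + 2*cmod c*\<bar>\<kappa>\<bar> + 2*cmod c*\<alpha>)"
      by (simp add: algebra_simps)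
    finally show ?thesis by (simp add: E_def)
  qed

  show ?thesis
  proof (intro exI allI impI)
    fix z assume z: "-\<alpha> < Im z" "Im z < 0" "R \<le> Re z"
    have "2*pi * cmod (H z) \<le> (\<alpha> + \<bar>\<kappa>\<bar>) * B * C0 * cmod (exp (c*z))"
      by (rule le_eps_lemma[OF key[OF z]]) (use \<alpha> in auto)
    then show "cmod (H z) \<le> ((\<alpha> + \<bar>\<kappa>\<bar>) * B * C0 / (2*pi)) * cmod (exp (c*z))"
      by (simp add: field_simps)
  qed
qed



lemma abs_le_quad: fixes t d :: real assumes "d > 0" shows "\<bar>t\<bar> \<le> d/2 + t\<^sup>2/(2*d)"
proof -
  have "0 \<le> (\<bar>t\<bar> - d)\<^sup>2" by simp
  then have "2*d*\<bar>t\<bar> \<le> d\<^sup>2 + t\<^sup>2" by (simp add: power2_eq_square algebra_simps)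
  then show ?thesis using assms by (simp add: field_simps power2_eq_square)
qed

lemma L2_L1:
  fixes F :: "real \<Rightarrow> real \<Rightarrow> complex" and \<phi> :: "real \<Rightarrow> complex"
  assumes ab: "a \<le> b" and yb: "yb > 0" and \<phi>m: "\<phi> measurable_on {a..b}"
    and \<phi>2: "(\<lambda>x. (cmod (\<phi> x))\<^sup>2) integrable_on {a..b}"
    and Fc: "\<And>y. 0 < y \<Longrightarrow> y < yb \<Longrightarrow> continuous_on {a..b} (F y)"
    and lim: "((\<lambda>y. integral {a..b} (\<lambda>x. (cmod (F y x - \<phi> x))\<^sup>2)) \<longlongrightarrow> 0) (at_right 0)"
  shows L2_L1_int: "\<And>y. 0 < y \<Longrightarrow> y < yb \<Longrightarrow> (\<lambda>x. cmod (F y x - \<phi> x)) integrable_on {a..b}"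
    and L2_L1_lim: "((\<lambda>y. integral {a..b} (\<lambda>x. cmod (F y x - \<phi> x))) \<longlongrightarrow> 0) (at_right 0)"
proof -
  have Sl: "{a..b} \<in> sets lebesgue" by simp
  have \<phi>b: "\<phi> \<in> borel_measurable (lebesgue_on {a..b})"
    using \<phi>m measurable_on_iff_borel_measurable[OF Sl] by blast
  have sq: "(\<lambda>x. (cmod (F y x - \<phi> x))\<^sup>2) integrable_on {a..b}"
      and ab1: "(\<lambda>x. cmod (F y x - \<phi> x)) integrable_on {a..b}"
    if y: "0 < y" "y < yb" for y
  proof -
    have Fb: "F y \<in> borel_measurable (lebesgue_on {a..b})"
      by (rule continuous_imp_measurable_on_sets_lebesgue[OF Fc[OF y] Sl])
    have "bounded (F y ` {a..b})"
      using compact_imp_bounded[OF compact_continuous_image[OF Fc[OF y] compact_Icc]] .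
    then obtain BF where "\<forall>x\<in>{a..b}. cmod (F y x) \<le> BF" unfolding bounded_iff by auto
    then have BF: "\<And>x. x \<in> {a..b} \<Longrightarrow> cmod (F y x) \<le> BF" by blast
    have Db: "(\<lambda>x. (cmod (F y x - \<phi> x))\<^sup>2) \<in> borel_measurable (lebesgue_on {a..b})"
      using Fb \<phi>b by measurable
    have Db1: "(\<lambda>x. cmod (F y x - \<phi> x)) \<in> borel_measurable (lebesgue_on {a..b})"
      using Fb \<phi>b by measurable
    have gi: "(\<lambda>x. 2 * BF\<^sup>2 + 2 * (cmod (\<phi> x))\<^sup>2) integrable_on {a..b}"
      using \<phi>2 by (intro integrable_add integrable_on_const integrable_on_cmult_left) auto
    show sq: "(\<lambda>x. (cmod (F y x - \<phi> x))\<^sup>2) integrable_on {a..b}"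
    proof (rule measurable_bounded_by_integrable_imp_integrable[OF Db gi _ Sl])
      fix x assume x: "x \<in> {a..b}"
      have "cmod (F y x - \<phi> x) \<le> cmod (F y x) + cmod (\<phi> x)" by (rule norm_triangle_ineq4)
      also have "\<dots> \<le> BF + cmod (\<phi> x)" using BF[OF x] by simp
      finally have e: "cmod (F y x - \<phi> x) \<le> BF + cmod (\<phi> x)" .
      have "(cmod (F y x - \<phi> x))\<^sup>2 \<le> (BF + cmod (\<phi> x))\<^sup>2"
        using e by (intro power_mono) auto
      also have "\<dots> \<le> 2 * BF\<^sup>2 + 2 * (cmod (\<phi> x))\<^sup>2"
        using sum_squares_bound[of BF "cmod (\<phi> x)"] by (simp add: power2_eq_square algebra_simps)
      finally show "norm ((cmod (F y x - \<phi> x))\<^sup>2) \<le> 2 * BF\<^sup>2 + 2 * (cmod (\<phi> x))\<^sup>2" by simp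
    qed
    have gi2: "(\<lambda>x. 1/2 + (cmod (F y x - \<phi> x))\<^sup>2 / 2) integrable_on {a..b}"
      by (intro integrable_add integrable_on_const integrable_on_divide sq) auto
    show "(\<lambda>x. cmod (F y x - \<phi> x)) integrable_on {a..b}"
    proof (rule measurable_bounded_by_integrable_imp_integrable[OF Db1 gi2 _ Sl])
      fix x assume "x \<in> {a..b}"
      show "norm (cmod (F y x - \<phi> x)) \<le> 1/2 + (cmod (F y x - \<phi> x))\<^sup>2 / 2"
        using abs_le_quad[of 1 "cmod (F y x - \<phi> x)"] by simp
    qed
  qed
  show "(\<lambda>x. cmod (F y x - \<phi> x)) integrable_on {a..b}" if "0 < y" "y < yb" for y
    using ab1[OF that] .
  show "((\<lambda>y. integral {a..b} (\<lambda>x. cmod (F y x - \<phi> x))) \<longlongrightarrow> 0) (at_right 0)"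
  proof (rule tendstoI)
    fix e :: real assume e: "e > 0"
    define d where "d = e / (2 * (b - a + 1))"
    have d: "d > 0" using e ab by (simp add: d_def)
    have ev1: "\<forall>\<^sub>F y in at_right 0. integral {a..b} (\<lambda>x. (cmod (F y x - \<phi> x))\<^sup>2) < d * e"
      using order_tendstoD(2)[OF lim, of "d*e"] d e by simp
    have ev2: "\<forall>\<^sub>F y in at_right 0. 0 < y \<and> y < yb"
      unfolding eventually_at_right_field using yb by (intro exI[of _ yb]) auto
    show "\<forall>\<^sub>F y in at_right 0. dist (integral {a..b} (\<lambda>x. cmod (F y x - \<phi> x))) 0 < e"
      using ev1 ev2
    proof eventually_elim
      case (elim y)
      have i1: "(\<lambda>x. cmod (F y x - \<phi> x)) integrable_on {a..b}" using ab1 elim by auto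
      have i2: "(\<lambda>x. (cmod (F y x - \<phi> x))\<^sup>2) integrable_on {a..b}" using sq elim by auto
      have nn: "integral {a..b} (\<lambda>x. cmod (F y x - \<phi> x)) \<ge> 0"
        by (rule integral_nonneg[OF i1]) auto
      have "integral {a..b} (\<lambda>x. cmod (F y x - \<phi> x)) \<le>
            integral {a..b} (\<lambda>x. d/2 + (cmod (F y x - \<phi> x))\<^sup>2 / (2*d))"
      proof (rule integral_le[OF i1])
        show "(\<lambda>x. d/2 + (cmod (F y x - \<phi> x))\<^sup>2 / (2*d)) integrable_on {a..b}"
          using i2 by (intro integrable_add integrable_on_divide) auto
        fix x show "cmod (F y x - \<phi> x) \<le> d/2 + (cmod (F y x - \<phi> x))\<^sup>2 / (2*d)"
          using abs_le_quad[OF d, of "cmod (F y x - \<phi> x)"] by simp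
      qed
      also have "\<dots> = (b - a) * (d/2) + integral {a..b} (\<lambda>x. (cmod (F y x - \<phi> x))\<^sup>2) / (2*d)"
      proof -
        have j: "(\<lambda>x. (cmod (F y x - \<phi> x))\<^sup>2 / (2*d)) integrable_on {a..b}"
          using i2 by (rule integrable_on_divide)
        have "integral {a..b} (\<lambda>x. (cmod (F y x - \<phi> x))\<^sup>2 / (2*d)) =
              integral {a..b} (\<lambda>x. (cmod (F y x - \<phi> x))\<^sup>2) / (2*d)"
          using integral_mult_right[of "{a..b}" "1/(2*d)" "\<lambda>x. (cmod (F y x - \<phi> x))\<^sup>2"]
          by (simp add: field_simps)
        then show ?thesis
          using integral_add[OF integrable_on_const[of "{a..b}" "d/2"] j] ab by simp
      qed
      also have "\<dots> < e"
      proof -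
        have "(b - a) * (d/2) \<le> e/4" using ab e by (simp add: d_def field_simps)
        moreover have "integral {a..b} (\<lambda>x. (cmod (F y x - \<phi> x))\<^sup>2) / (2*d) < e/2"
          using elim d by (simp add: field_simps)
        ultimately show ?thesis using e by linarith
      qed
      finally show ?case using nn by simp
    qed
  qed
qed



lemma unif_bv:
  fixes G :: "complex \<Rightarrow> complex" and P :: "real \<Rightarrow> real \<Rightarrow> complex" and Q :: "real \<Rightarrow> complex"
  assumes ab: "a \<le> b" and yb: "yb > 0" and K: "compact K" and Gc: "continuous_on K G"
    and PK: "\<And>x y. x \<in> {a..b} \<Longrightarrow> 0 < y \<Longrightarrow> y < yb \<Longrightarrow> P y x \<in> K"
    and QK: "\<And>x. x \<in> {a..b} \<Longrightarrow> Q x \<in> K"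
    and Pc: "\<And>y. 0 < y \<Longrightarrow> y < yb \<Longrightarrow> continuous_on {a..b} (P y)"
    and Qc: "continuous_on {a..b} Q"
    and dPQ: "\<And>x y. x \<in> {a..b} \<Longrightarrow> 0 < y \<Longrightarrow> y < yb \<Longrightarrow> dist (P y x) (Q x) \<le> y"
  shows unif_bv_int: "\<And>y. 0 < y \<Longrightarrow> y < yb \<Longrightarrow> continuous_on {a..b} (\<lambda>x. cmod (G (P y x) - G (Q x)))"
    and unif_bv_lim: "((\<lambda>y. integral {a..b} (\<lambda>x. cmod (G (P y x) - G (Q x)))) \<longlongrightarrow> 0) (at_right 0)"
proof -
  show ct: "continuous_on {a..b} (\<lambda>x. cmod (G (P y x) - G (Q x)))" if y: "0 < y" "y < yb" for y
  proof -
    have "continuous_on {a..b} (\<lambda>x. G (P y x))"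
      by (rule continuous_on_compose2[OF Gc Pc[OF y]]) (use PK y in auto)
    moreover have "continuous_on {a..b} (\<lambda>x. G (Q x))"
      by (rule continuous_on_compose2[OF Gc Qc]) (use QK in auto)
    ultimately show ?thesis by (intro continuous_intros)
  qed
  show "((\<lambda>y. integral {a..b} (\<lambda>x. cmod (G (P y x) - G (Q x)))) \<longlongrightarrow> 0) (at_right 0)"
  proof (rule tendstoI)
    fix e :: real assume e: "e > 0"
    define e' where "e' = e / (2 * (b - a + 1))"
    have e': "e' > 0" using e ab by (simp add: e'_def)
    obtain d where d: "d > 0" "\<And>u u'. u \<in> K \<Longrightarrow> u' \<in> K \<Longrightarrow> dist u' u < d \<Longrightarrow> dist (G u') (G u) < e'"
      using compact_uniformly_continuous[OF Gc K] e' unfolding uniformly_continuous_on_def by metis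
    have ev: "\<forall>\<^sub>F y in at_right 0. 0 < y \<and> y < min yb d"
      unfolding eventually_at_right_field using yb d by (intro exI[of _ "min yb d"]) auto
    show "\<forall>\<^sub>F y in at_right 0. dist (integral {a..b} (\<lambda>x. cmod (G (P y x) - G (Q x)))) 0 < e"
      using ev
    proof eventually_elim
      case (elim y)
      have i1: "(\<lambda>x. cmod (G (P y x) - G (Q x))) integrable_on {a..b}"
        using ct[of y] elim by (auto intro: integrable_continuous_interval)
      have nn: "integral {a..b} (\<lambda>x. cmod (G (P y x) - G (Q x))) \<ge> 0"
        by (rule integral_nonneg[OF i1]) auto
      have "integral {a..b} (\<lambda>x. cmod (G (P y x) - G (Q x))) \<le> integral {a..b} (\<lambda>x. e')"
      proof (rule integral_le[OF i1])
        fix x assume x: "x \<in> {a..b}"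
        have "dist (P y x) (Q x) < d" using dPQ[OF x] elim by force
        then have "dist (G (P y x)) (G (Q x)) < e'"
          using d(2)[OF QK[OF x] PK[OF x]] elim by auto
        then show "cmod (G (P y x) - G (Q x)) \<le> e'" by (simp add: dist_norm)
      qed auto
      also have "\<dots> = (b - a) * e'" using ab by simp
      also have "\<dots> < e"
      proof -
        have "a*e \<le> b*e" using ab e by (intro mult_right_mono) auto
        then have "a * e < b * e + e * 2" using e by linarith
        then show ?thesis using ab e by (simp add: e'_def field_simps)
      qed
      finally show ?case using nn by simp
    qed
  qed
qed

lemma bv_combine:
  fixes \<Xi> G :: "complex \<Rightarrow> complex" and P :: "real \<Rightarrow> real \<Rightarrow> complex" and Q :: "real \<Rightarrow> complex"
    and \<phi> :: "real \<Rightarrow> complex" and C' :: complex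
  assumes ab: "a \<le> b" and yb: "yb > 0" and \<phi>m: "\<phi> measurable_on {a..b}"
    and \<phi>2: "(\<lambda>x. (cmod (\<phi> x))\<^sup>2) integrable_on {a..b}"
    and \<Xi>c: "continuous_on U \<Xi>" and PU: "\<And>x y. x \<in> {a..b} \<Longrightarrow> 0 < y \<Longrightarrow> y < yb \<Longrightarrow> P y x \<in> U"
    and K: "compact K" and Gc: "continuous_on K G"
    and PK: "\<And>x y. x \<in> {a..b} \<Longrightarrow> 0 < y \<Longrightarrow> y < yb \<Longrightarrow> P y x \<in> K"
    and QK: "\<And>x. x \<in> {a..b} \<Longrightarrow> Q x \<in> K"
    and Pc: "\<And>y. 0 < y \<Longrightarrow> y < yb \<Longrightarrow> continuous_on {a..b} (P y)"
    and Qc: "continuous_on {a..b} Q"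
    and dPQ: "\<And>x y. x \<in> {a..b} \<Longrightarrow> 0 < y \<Longrightarrow> y < yb \<Longrightarrow> dist (P y x) (Q x) \<le> y"
    and L2: "((\<lambda>y. integral {a..b} (\<lambda>x. (cmod (\<Xi> (P y x) - \<phi> x))\<^sup>2)) \<longlongrightarrow> 0) (at_right 0)"
  shows bv_combine_int: "\<And>y. 0 < y \<Longrightarrow> y < yb \<Longrightarrow>
      (\<lambda>x. cmod ((\<Xi> (P y x) - C' + G (P y x)) - (\<phi> x - C' + G (Q x)))) integrable_on {a..b}"
    and bv_combine_lim: "((\<lambda>y. integral {a..b}
      (\<lambda>x. cmod ((\<Xi> (P y x) - C' + G (P y x)) - (\<phi> x - C' + G (Q x))))) \<longlongrightarrow> 0) (at_right 0)"
proof -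
  have Fc: "continuous_on {a..b} (\<lambda>x. \<Xi> (P y x))" if "0 < y" "y < yb" for y
    by (rule continuous_on_compose2[OF \<Xi>c Pc[OF that]]) (use PU that in auto)
  have i1: "(\<lambda>x. cmod (\<Xi> (P y x) - \<phi> x)) integrable_on {a..b}" if "0 < y" "y < yb" for y
    by (rule L2_L1_int[where F="\<lambda>y x. \<Xi> (P y x)"]) (use ab yb \<phi>m \<phi>2 Fc L2 that in auto)
  have l1: "((\<lambda>y. integral {a..b} (\<lambda>x. cmod (\<Xi> (P y x) - \<phi> x))) \<longlongrightarrow> 0) (at_right 0)"
    by (rule L2_L1_lim[where F="\<lambda>y x. \<Xi> (P y x)"]) (use ab yb \<phi>m \<phi>2 Fc L2 in auto)
  have c2: "continuous_on {a..b} (\<lambda>x. cmod (G (P y x) - G (Q x)))" if "0 < y" "y < yb" for y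
    by (rule unif_bv_int[where K=K]) (use ab yb K Gc PK QK Pc Qc dPQ that in auto)
  have l2: "((\<lambda>y. integral {a..b} (\<lambda>x. cmod (G (P y x) - G (Q x)))) \<longlongrightarrow> 0) (at_right 0)"
    by (rule unif_bv_lim[where K=K]) (use ab yb K Gc PK QK Pc Qc dPQ in auto)
  have Sl: "{a..b} \<in> sets lebesgue" by simp
  have \<phi>b: "\<phi> \<in> borel_measurable (lebesgue_on {a..b})"
    using \<phi>m measurable_on_iff_borel_measurable[OF Sl] by blast
  have pw: "cmod ((\<Xi> (P y x) - C' + G (P y x)) - (\<phi> x - C' + G (Q x)))
      \<le> cmod (\<Xi> (P y x) - \<phi> x) + cmod (G (P y x) - G (Q x))" for x y
  proof -
    have "(\<Xi> (P y x) - C' + G (P y x)) - (\<phi> x - C' + G (Q x)) = (\<Xi> (P y x) - \<phi> x) + (G (P y x) - G (Q x))"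
      by simp
    then show ?thesis by (metis norm_triangle_ineq)
  qed
  show int: "(\<lambda>x. cmod ((\<Xi> (P y x) - C' + G (P y x)) - (\<phi> x - C' + G (Q x)))) integrable_on {a..b}"
    if y: "0 < y" "y < yb" for y
  proof (rule measurable_bounded_by_integrable_imp_integrable[OF _ _ _ Sl])
    have Fb: "(\<lambda>x. \<Xi> (P y x)) \<in> borel_measurable (lebesgue_on {a..b})"
      by (rule continuous_imp_measurable_on_sets_lebesgue[OF Fc[OF y] Sl])
    have Gb1: "(\<lambda>x. G (P y x)) \<in> borel_measurable (lebesgue_on {a..b})"
      by (rule continuous_imp_measurable_on_sets_lebesgue[OF _ Sl],
          rule continuous_on_compose2[OF Gc Pc[OF y]]) (use PK y in auto)
    have Gb2: "(\<lambda>x. G (Q x)) \<in> borel_measurable (lebesgue_on {a..b})"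
      by (rule continuous_imp_measurable_on_sets_lebesgue[OF _ Sl],
          rule continuous_on_compose2[OF Gc Qc]) (use QK in auto)
    show "(\<lambda>x. cmod ((\<Xi> (P y x) - C' + G (P y x)) - (\<phi> x - C' + G (Q x)))) \<in> borel_measurable (lebesgue_on {a..b})"
      using Fb Gb1 Gb2 \<phi>b by measurable
    show "(\<lambda>x. cmod (\<Xi> (P y x) - \<phi> x) + cmod (G (P y x) - G (Q x))) integrable_on {a..b}"
      using i1[OF y] integrable_continuous_interval[OF c2[OF y]] by (rule integrable_add)
    show "norm (cmod ((\<Xi> (P y x) - C' + G (P y x)) - (\<phi> x - C' + G (Q x))))
        \<le> cmod (\<Xi> (P y x) - \<phi> x) + cmod (G (P y x) - G (Q x))" for x using pw[of y x] by simp
  qed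
  have lsum: "((\<lambda>y. integral {a..b} (\<lambda>x. cmod (\<Xi> (P y x) - \<phi> x)) + integral {a..b} (\<lambda>x. cmod (G (P y x) - G (Q x)))) \<longlongrightarrow> 0 + 0) (at_right 0)"
    by (intro tendsto_add l1 l2)
  show "((\<lambda>y. integral {a..b}
      (\<lambda>x. cmod ((\<Xi> (P y x) - C' + G (P y x)) - (\<phi> x - C' + G (Q x))))) \<longlongrightarrow> 0) (at_right 0)"
  proof (rule tendsto_sandwich[OF _ _ tendsto_const lsum[simplified]])
    have ev: "\<forall>\<^sub>F y in at_right 0. 0 < y \<and> y < yb"
      unfolding eventually_at_right_field using yb by (intro exI[of _ yb]) auto
    show "\<forall>\<^sub>F y in at_right 0. 0 \<le> integral {a..b}
      (\<lambda>x. cmod ((\<Xi> (P y x) - C' + G (P y x)) - (\<phi> x - C' + G (Q x))))"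
      using ev by eventually_elim (use int in \<open>auto intro!: integral_nonneg\<close>)
    show "\<forall>\<^sub>F y in at_right 0. integral {a..b}
      (\<lambda>x. cmod ((\<Xi> (P y x) - C' + G (P y x)) - (\<phi> x - C' + G (Q x))))
      \<le> integral {a..b} (\<lambda>x. cmod (\<Xi> (P y x) - \<phi> x)) + integral {a..b} (\<lambda>x. cmod (G (P y x) - G (Q x)))"
      using ev
    proof eventually_elim
      case (elim y)
      have "integral {a..b} (\<lambda>x. cmod ((\<Xi> (P y x) - C' + G (P y x)) - (\<phi> x - C' + G (Q x))))
          \<le> integral {a..b} (\<lambda>x. cmod (\<Xi> (P y x) - \<phi> x) + cmod (G (P y x) - G (Q x)))"
        by (rule integral_le[OF int])
           (use elim i1 integrable_continuous_interval[OF c2] pw in \<open>auto intro!: integrable_add\<close>)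
      also have "\<dots> = integral {a..b} (\<lambda>x. cmod (\<Xi> (P y x) - \<phi> x)) + integral {a..b} (\<lambda>x. cmod (G (P y x) - G (Q x)))"
        using elim i1 integrable_continuous_interval[OF c2] by (intro integral_add) auto
      finally show ?case .
    qed
  qed
qed



lemma contC: "continuous_on T (\<lambda>x. Complex x y)"
proof -
  have "continuous_on T (\<lambda>x. of_real x + \<i> * of_real y)" by (intro continuous_intros)
  moreover have "(\<lambda>x. of_real x + \<i> * of_real y) = (\<lambda>x. Complex x y)" by (auto simp: complex_eq_iff)
  ultimately show ?thesis by metis
qed

lemma dist_Complex_same: "dist (Complex x u) (Complex x v) = \<bar>u - v\<bar>"
  by (simp add: dist_norm cmod_def)

lemma half:
  fixes \<alpha> \<kappa> \<rho> Aa Kx CG :: real and \<Xi> G :: "complex \<Rightarrow> complex" and \<Xi>m \<Xi>p :: "real \<Rightarrow> complex"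
    and C' :: complex
  assumes \<alpha>: "\<alpha> > 0" and \<rho>: "\<rho> > 0" and Aa: "Aa \<ge> 1"
  and Xh: "\<Xi> holomorphic_on {w. -\<alpha> < Im w \<and> Im w < 0 \<and> Aa < Re w}"
  and Gh: "G holomorphic_on {w. -\<alpha> < Im w \<and> Im w < 0 \<and> Aa < Re w}"
  and Gc: "continuous_on {w. -\<alpha> \<le> Im w \<and> Im w \<le> 0 \<and> Aa < Re w} G"
  and Gd: "\<And>w. -\<alpha> < Im w \<Longrightarrow> Im w < 0 \<Longrightarrow> Aa < Re w \<Longrightarrow> cmod (G w) \<le> CG * exp (-\<rho> * Re w)"
  and Xd: "\<And>w. -\<alpha> < Im w \<Longrightarrow> Im w < 0 \<Longrightarrow> Aa < Re w \<Longrightarrow> cmod (\<Xi> w - C') \<le> Kx / Re w"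
  and mm: "\<And>a b. Aa < a \<Longrightarrow> \<Xi>m measurable_on {a..b} \<and> (\<lambda>x. (cmod (\<Xi>m x))\<^sup>2) integrable_on {a..b}"
  and pm: "\<And>a b. Aa < a \<Longrightarrow> \<Xi>p measurable_on {a..b} \<and> (\<lambda>x. (cmod (\<Xi>p x))\<^sup>2) integrable_on {a..b}"
  and lowL2: "\<And>a b. Aa < a \<Longrightarrow>
      ((\<lambda>y. integral {a..b} (\<lambda>x. (cmod (\<Xi> (Complex x (- y)) - \<Xi>m x))\<^sup>2)) \<longlongrightarrow> 0) (at_right 0)"
  and upL2: "\<And>a b. Aa < a \<Longrightarrow>
      ((\<lambda>y. integral {a..b} (\<lambda>x. (cmod (\<Xi> (Complex x (- \<alpha> + y)) - \<Xi>p x))\<^sup>2)) \<longlongrightarrow> 0) (at_right 0)"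
  and jump: "negligible {x. Aa < x \<and> \<Xi>p x + G (Complex x (-\<alpha>)) \<noteq> \<Xi>m (x - \<kappa>) + G (Complex (x - \<kappa>) 0)}"
  shows "\<exists>C R. \<forall>z. -\<alpha> < Im z \<longrightarrow> Im z < 0 \<longrightarrow> R \<le> Re z \<longrightarrow>
           cmod (\<Xi> z - C' + G z) \<le> C * cmod (exp (2*pi*\<i>/Complex \<kappa> (-\<alpha>) * z))"
proof -
  define U where "U = {w. -\<alpha> < Im w \<and> Im w < 0 \<and> Aa < Re w}"
  define H where "H w = \<Xi> w - C' + G w" for w
  define hm where "hm x = \<Xi>m x - C' + G (Complex x 0)" for x
  define hp where "hp x = \<Xi>p x - C' + G (Complex x (-\<alpha>))" for x
  have \<Xi>c: "continuous_on U \<Xi>" using Xh by (simp add: U_def holomorphic_on_imp_continuous_on)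
  have Kc: "continuous_on (cbox (Complex a (-\<alpha>)) (Complex b 0)) G" if "Aa < a" for a b
    by (rule continuous_on_subset[OF Gc]) (use that in \<open>auto simp: in_cbox_complex_iff\<close>)
  have holo: "H holomorphic_on U" unfolding H_def U_def using Xh Gh by (intro holomorphic_intros) auto
  have bdd: "cmod (H w) \<le> \<bar>Kx\<bar> + \<bar>CG\<bar>" if w: "-\<alpha> < Im w" "Im w < 0" "Aa < Re w" for w
  proof -
    have r1: "Re w \<ge> 1" using w Aa by simp
    have "cmod (H w) \<le> cmod (\<Xi> w - C') + cmod (G w)" unfolding H_def by (rule norm_triangle_ineq)
    also have "\<dots> \<le> Kx / Re w + CG * exp (-\<rho> * Re w)" using Xd[OF w] Gd[OF w] by simp
    also have "\<dots> \<le> \<bar>Kx\<bar> + \<bar>CG\<bar>"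
    proof -
      have "Kx / Re w \<le> \<bar>Kx\<bar> / Re w" using r1 by (simp add: divide_right_mono)
      also have "\<dots> \<le> \<bar>Kx\<bar>" using r1 by (simp add: divide_le_eq mult_le_cancel_left1)
      finally have a: "Kx / Re w \<le> \<bar>Kx\<bar>" .
      have "exp (-\<rho> * Re w) \<le> 1" using \<rho> r1 by simp
      then have "CG * exp (-\<rho> * Re w) \<le> \<bar>CG\<bar> * 1"
      proof -
        have "CG * exp (-\<rho> * Re w) \<le> \<bar>CG\<bar> * exp (-\<rho> * Re w)"
          by (intro mult_right_mono) auto
        also have "\<dots> \<le> \<bar>CG\<bar> * 1" using \<open>exp (-\<rho> * Re w) \<le> 1\<close> by (intro mult_left_mono) auto
        finally show ?thesis .
      qed
      then show ?thesis using a by simp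
    qed
    finally show ?thesis .
  qed
  have lim: "\<exists>R. \<forall>w. -\<alpha> < Im w \<longrightarrow> Im w < 0 \<longrightarrow> R \<le> Re w \<longrightarrow> cmod (H w) \<le> e" if e: "e > 0" for e
  proof -
    define KK where "KK = \<bar>Kx\<bar> + \<bar>CG\<bar> / \<rho>"
    have KK: "KK \<ge> 0" using \<rho> by (simp add: KK_def)
    show ?thesis
    proof (intro exI[of _ "max (Aa + 1) (KK / e)"] allI impI)
      fix w assume w: "-\<alpha> < Im w" "Im w < 0" "max (Aa + 1) (KK / e) \<le> Re w"
      have w': "Aa < Re w" using w by simp
      have r1: "Re w \<ge> 1" using w Aa by simp
      have "cmod (H w) \<le> cmod (\<Xi> w - C') + cmod (G w)" unfolding H_def by (rule norm_triangle_ineq)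
      also have "\<dots> \<le> Kx / Re w + CG * exp (-\<rho> * Re w)" using Xd[OF w(1,2) w'] Gd[OF w(1,2) w'] by simp
      also have "\<dots> \<le> KK / Re w"
      proof -
        have a: "Kx / Re w \<le> \<bar>Kx\<bar> / Re w" using r1 by (simp add: divide_right_mono)
        have "exp (\<rho> * Re w) \<ge> \<rho> * Re w"
          using exp_ge_add_one_self[of "\<rho> * Re w"] by linarith
        then have "exp (-\<rho> * Re w) \<le> 1 / (\<rho> * Re w)" using \<rho> r1
          by (simp add: exp_minus field_simps)
        then have "CG * exp (-\<rho> * Re w) \<le> \<bar>CG\<bar> * (1 / (\<rho> * Re w))"
        proof -
          assume h: "exp (-\<rho> * Re w) \<le> 1 / (\<rho> * Re w)"
          have "CG * exp (-\<rho> * Re w) \<le> \<bar>CG\<bar> * exp (-\<rho> * Re w)"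
            by (intro mult_right_mono) auto
          also have "\<dots> \<le> \<bar>CG\<bar> * (1 / (\<rho> * Re w))" using h by (intro mult_left_mono) auto
          finally show ?thesis .
        qed
        then show ?thesis using a by (simp add: KK_def add_divide_distrib)
      qed
      also have "\<dots> \<le> e"
      proof -
        have "KK / e \<le> Re w" using w by simp
        then show ?thesis using e r1 KK by (simp add: field_simps)
      qed
      finally show "cmod (H w) \<le> e" .
    qed
  qed
  have low: "((\<lambda>y. integral {a..b} (\<lambda>x. cmod (H (Complex x (-y)) - hm x))) \<longlongrightarrow> 0) (at_right 0)"
    if "Aa < a" "a \<le> b" for a b
    unfolding H_def hm_def
    by (rule bv_combine_lim[where U=U and K="cbox (Complex a (-\<alpha>)) (Complex b 0)" and yb=\<alpha>
        and P="\<lambda>y x. Complex x (-y)" and Q="\<lambda>x. Complex x 0" and \<phi>=\<Xi>m and \<Xi>=\<Xi> and G=G and C'=C'])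
       (use that \<alpha> mm[OF that(1)] \<Xi>c Kc[OF that(1)] lowL2[OF that(1)] in
        \<open>auto simp: U_def in_cbox_complex_iff contC dist_Complex_same\<close>)
  have lowi: "(\<lambda>x. cmod (H (Complex x (-y)) - hm x)) integrable_on {a..b}"
    if "Aa < a" "0 < y" "y < \<alpha>" for a b y
  proof (cases "a \<le> b")
    case True
    show ?thesis unfolding H_def hm_def
      by (rule bv_combine_int[where U=U and K="cbox (Complex a (-\<alpha>)) (Complex b 0)" and yb=\<alpha>
        and P="\<lambda>y x. Complex x (-y)" and Q="\<lambda>x. Complex x 0" and \<phi>=\<Xi>m and \<Xi>=\<Xi> and G=G and C'=C'])
         (use that True \<alpha> mm[OF that(1)] \<Xi>c Kc[OF that(1)] lowL2[OF that(1)] in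
          \<open>auto simp: U_def in_cbox_complex_iff contC dist_Complex_same\<close>)
  qed (simp add: integrable_on_empty)
  have up: "((\<lambda>y. integral {a..b} (\<lambda>x. cmod (H (Complex x (-\<alpha>+y)) - hp x))) \<longlongrightarrow> 0) (at_right 0)"
    if "Aa < a" "a \<le> b" for a b
    unfolding H_def hp_def
    by (rule bv_combine_lim[where U=U and K="cbox (Complex a (-\<alpha>)) (Complex b 0)" and yb=\<alpha>
        and P="\<lambda>y x. Complex x (-\<alpha>+y)" and Q="\<lambda>x. Complex x (-\<alpha>)" and \<phi>=\<Xi>p and \<Xi>=\<Xi> and G=G and C'=C'])
       (use that \<alpha> pm[OF that(1)] \<Xi>c Kc[OF that(1)] upL2[OF that(1)] in
        \<open>auto simp: U_def in_cbox_complex_iff contC dist_Complex_same\<close>)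
  have upi: "(\<lambda>x. cmod (H (Complex x (-\<alpha>+y)) - hp x)) integrable_on {a..b}"
    if "Aa < a" "0 < y" "y < \<alpha>" for a b y
  proof (cases "a \<le> b")
    case True
    show ?thesis unfolding H_def hp_def
      by (rule bv_combine_int[where U=U and K="cbox (Complex a (-\<alpha>)) (Complex b 0)" and yb=\<alpha>
        and P="\<lambda>y x. Complex x (-\<alpha>+y)" and Q="\<lambda>x. Complex x (-\<alpha>)" and \<phi>=\<Xi>p and \<Xi>=\<Xi> and G=G and C'=C'])
         (use that True \<alpha> pm[OF that(1)] \<Xi>c Kc[OF that(1)] upL2[OF that(1)] in
          \<open>auto simp: U_def in_cbox_complex_iff contC dist_Complex_same\<close>)
  qed (simp add: integrable_on_empty)
  have jump': "negligible {x. Aa < x \<and> hp x \<noteq> hm (x - \<kappa>)}"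
  proof -
    have "{x. Aa < x \<and> hp x \<noteq> hm (x - \<kappa>)} =
          {x. Aa < x \<and> \<Xi>p x + G (Complex x (-\<alpha>)) \<noteq> \<Xi>m (x - \<kappa>) + G (Complex (x - \<kappa>) 0)}"
      by (auto simp: hp_def hm_def algebra_simps)
    then show ?thesis using jump by simp
  qed
  have "\<exists>C R. \<forall>z. -\<alpha> < Im z \<longrightarrow> Im z < 0 \<longrightarrow> R \<le> Re z \<longrightarrow>
           cmod (H z) \<le> C * cmod (exp (2*pi*\<i>/Complex \<kappa> (-\<alpha>) * z))"
    by (rule core[OF \<alpha> holo[unfolded U_def] bdd lim low lowi up upi jump'])
  then show ?thesis by (simp add: H_def)
qed



lemma negligible_affine_image:
  fixes N :: "real set" and m c :: real
  assumes "negligible N"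
  shows "negligible ((\<lambda>y. m * y + c) ` N)"
proof (rule negligible_differentiable_image_negligible[OF _ assms])
  have "((\<lambda>y. m * y + c) has_derivative (\<lambda>h. m * h)) (at x within N)" for x
    by (auto intro!: derivative_eq_intros)
  then show "(\<lambda>y. m * y + c) differentiable_on N"
    unfolding differentiable_on_def differentiable_def by blast
qed auto

lemma measurable_on_affine:
  fixes f :: "real \<Rightarrow> complex" and m c :: real
  assumes m: "m \<noteq> 0" and f: "f measurable_on S"
  shows "(\<lambda>x. f (m * x + c)) measurable_on {x. m * x + c \<in> S}"
proof -
  from f obtain N g where N: "negligible N" and gc: "\<And>n. continuous_on UNIV (g n)"
    and lim: "\<And>x. x \<notin> N \<Longrightarrow> (\<lambda>n. g n x) \<longlonglongrightarrow> (if x \<in> S then f x else 0)"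
    unfolding measurable_on_def by blast
  define N' where "N' = (\<lambda>y. (1/m) * y + (- c/m)) ` N"
  have N': "negligible N'" unfolding N'_def by (rule negligible_affine_image[OF N])
  have gc': "continuous_on UNIV (\<lambda>x. g n (m * x + c))" for n
    by (rule continuous_on_compose2[OF gc]) (auto intro!: continuous_intros)
  have lim': "(\<lambda>n. g n (m * x + c)) \<longlonglongrightarrow> (if x \<in> {x. m * x + c \<in> S} then f (m * x + c) else 0)"
    if "x \<notin> N'" for x
  proof -
    have "m * x + c \<notin> N"
    proof
      assume "m * x + c \<in> N"
      then have "(1/m) * (m * x + c) + (- c/m) \<in> N'" unfolding N'_def by blast
      moreover have "(1/m) * (m * x + c) + (- c/m) = x" using m by (simp add: field_simps)
      ultimately show False using that by simp
    qed
    then show ?thesis using lim by simp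
  qed
  show ?thesis unfolding measurable_on_def
    by (rule exI[of _ N'], rule exI[of _ "\<lambda>n x. g n (m * x + c)"]) (use N' gc' lim' in auto)
qed

lemma measurable_on_eq:
  assumes "f measurable_on S" "\<And>x. x \<in> S \<Longrightarrow> f x = g x"
  shows "g measurable_on S"
proof -
  have eq: "\<And>x. (if x \<in> S then f x else 0) = (if x \<in> S then g x else 0)" using assms(2) by auto
  show ?thesis using assms(1) unfolding measurable_on_def by (simp only: eq)
qed

lemma AE_lborel_negligible:
  assumes "AE x in lborel. P x"
  shows "\<exists>N. negligible N \<and> {x. \<not> P x} \<subseteq> N"
proof -
  have "AE x in lebesgue. P x" using AE_completion[OF assms] .
  then show ?thesis using eventually_ae_filter_negligible by blast
qed

lemma strip_closure_sub:
  assumes "-\<alpha> \<le> Im w" "Im w \<le> 0" "\<alpha> > 0"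
  shows "w \<in> closure (strip \<alpha>)"
proof -
  define B where "B = box (Complex (Re w - 1) (-\<alpha>)) (Complex (Re w + 1) 0)"
  have "Complex (Re w) (-\<alpha>/2) \<in> B" using assms by (auto simp: B_def in_box_complex_iff)
  then have ne: "B \<noteq> {}" by blast
  have "B \<subseteq> strip \<alpha>" by (auto simp: B_def strip_def in_box_complex_iff)
  then have "closure B \<subseteq> closure (strip \<alpha>)" by (rule closure_mono)
  moreover have "w \<in> closure B" using closure_box[OF ne[unfolded B_def]] assms by (auto simp: B_def in_cbox_complex_iff)
  ultimately show ?thesis by blast
qed

lemma smooth_on_cont:
  assumes "smooth_on U h"
  shows "continuous_on U h"
proof -
  from assms obtain h' where "\<forall>x\<in>U. (h has_derivative h' x) (at x)"
    by (cases rule: smooth_on.cases) auto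
  then show ?thesis
    by (intro continuous_at_imp_continuous_on) (auto intro: has_derivative_continuous)
qed

lemma smooth_upto_cont:
  assumes "smooth_upto A f"
  shows "continuous_on A f"
proof -
  from assms obtain U h where "open U" "A \<subseteq> U" "smooth_on U h" "\<forall>x\<in>A. h x = f x"
    unfolding smooth_upto_def by blast
  then have "continuous_on A h" using smooth_on_cont continuous_on_subset by blast
  then show ?thesis by (rule continuous_on_eq) (use \<open>\<forall>x\<in>A. h x = f x\<close> in auto)
qed



lemma asym_bound:
  fixes X C1 w :: complex and Ca r :: real
  assumes r: "r \<ge> 1" and wr: "cmod w \<ge> r" and h: "cmod (X - C1 / w) \<le> Ca / (cmod w)\<^sup>2"
  shows "cmod X \<le> (cmod C1 + \<bar>Ca\<bar>) / r"
proof -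
  have w0: "cmod w > 0" using r wr by linarith
  have "cmod X \<le> cmod (X - C1 / w) + cmod (C1 / w)" by (metis diff_add_cancel norm_triangle_ineq)
  also have "\<dots> \<le> \<bar>Ca\<bar> / (cmod w)\<^sup>2 + cmod C1 / cmod w"
    using h w0 by (intro add_mono) (auto simp: norm_divide intro: order_trans[OF _ divide_right_mono])
  also have "\<bar>Ca\<bar> / (cmod w)\<^sup>2 \<le> \<bar>Ca\<bar> / r"
  proof (rule divide_left_mono)
    have "r \<le> cmod w" by (rule wr)
    also have "\<dots> \<le> (cmod w)\<^sup>2"
    proof -
      have "cmod w * 1 \<le> cmod w * cmod w" using wr r by (intro mult_left_mono) auto
      then show ?thesis by (simp add: power2_eq_square)
    qed
    finally show "r \<le> (cmod w)\<^sup>2" .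
  qed (use r w0 in auto)
  also have "cmod C1 / cmod w \<le> cmod C1 / r"
    using r wr w0 by (intro divide_left_mono) auto
  finally show ?thesis by (simp add: add_divide_distrib)
qed


theorem lemma2p1:
  fixes \<alpha> \<kappa>m \<kappa>p M \<rho> :: real
    and g :: "real \<Rightarrow> real"
    and Gc :: "real \<Rightarrow> complex"
    and \<G> :: "complex \<Rightarrow> complex"
    and \<Xi> :: "complex \<Rightarrow> complex"
    and \<Xi>m \<Xi>p :: "real \<Rightarrow> complex"
    and C\<Xi> Cm1 :: complex
  assumes \<alpha>: "\<alpha> > 0"
    and M: "M > 0"
    and g_diffeo: "smooth_diffeo g"
    and g_left: "\<forall>x. x \<le> - M \<longrightarrow> g x = x + \<kappa>m"
    and g_right: "\<forall>x. x \<ge> M \<longrightarrow> g x = x + \<kappa>p"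
    and Gc_smooth: "smooth_on UNIV Gc"
    and Gc_supp: "\<forall>x. \<bar>x\<bar> > M \<longrightarrow> Gc x = 0"
    and G_smooth: "smooth_upto (closure (strip \<alpha>)) \<G>"
    and G_holo: "\<G> holomorphic_on (strip \<alpha> \<inter> {z. \<bar>Re z\<bar> > M / 2})"
    and \<rho>: "\<rho> > 0"
    and G_decay: "\<exists>C R. \<forall>z \<in> closure (strip \<alpha>) \<inter> {z. \<bar>Re z\<bar> > M / 2}.
            (Re z \<ge> R \<longrightarrow> cmod (\<G> z) \<le> C * cmod (exp (- of_real \<rho> * z))) \<and>
            (Re z \<le> - R \<longrightarrow> cmod (\<G> z) \<le> C * cmod (exp (of_real \<rho> * z)))"
    and Xi_holo: "\<Xi> holomorphic_on strip \<alpha>"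
    and Xi_bv_lower: "\<forall>a b. ((\<lambda>y. integral {a..b} (\<lambda>x. (cmod (\<Xi> (Complex x (- y)) - \<Xi>m x))\<^sup>2))
                              \<longlongrightarrow> 0) (at_right 0)"
    and Xi_bv_upper: "\<forall>a b. ((\<lambda>y. integral {a..b} (\<lambda>x. (cmod (\<Xi> (Complex x (- \<alpha> + y)) - \<Xi>p x))\<^sup>2))
                              \<longlongrightarrow> 0) (at_right 0)"
    and Xi_L2m: "L2_loc \<Xi>m"
    and Xi_L2p: "L2_loc (\<lambda>x. \<Xi>p (g x))"
    and Xi_jump: "AE x in lborel. \<Xi>p (g x) = \<Xi>m x + (Gc x + \<G> (of_real x) - \<G> (of_real (g x) - \<i> * of_real \<alpha>))"
    and Xi_asym: "\<exists>C R. \<forall>z \<in> strip \<alpha>.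
            (Re z \<ge> R \<longrightarrow> cmod (\<Xi> z - Cm1 / z) \<le> C / (cmod z)\<^sup>2) \<and>
            (Re z \<le> - R \<longrightarrow> cmod (\<Xi> z - C\<Xi> - Cm1 / z) \<le> C / (cmod z)\<^sup>2)"
  shows "\<exists>C R. \<forall>z \<in> strip \<alpha>.
            (Re z \<ge> R \<longrightarrow> cmod (\<Xi> z + \<G> z) \<le>
               C * cmod (exp (- (2 * of_real pi / of_real \<alpha>)
                     * ((- \<i> * of_real \<alpha>) / (- \<i> * of_real \<alpha> + of_real \<kappa>p)) * z))) \<and>
            (Re z \<le> - R \<longrightarrow> cmod (\<Xi> z - C\<Xi> + \<G> z) \<le>
               C * cmod (exp ((2 * of_real pi / of_real \<alpha>)
                     * ((- \<i> * of_real \<alpha>) / (- \<i> * of_real \<alpha> + of_real \<kappa>m)) * z)))"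
proof -
  obtain Ca Ra where XA: "\<And>z. z \<in> strip \<alpha> \<Longrightarrow>
            (Re z \<ge> Ra \<longrightarrow> cmod (\<Xi> z - Cm1 / z) \<le> Ca / (cmod z)\<^sup>2) \<and>
            (Re z \<le> - Ra \<longrightarrow> cmod (\<Xi> z - C\<Xi> - Cm1 / z) \<le> Ca / (cmod z)\<^sup>2)"
    using Xi_asym by blast
  obtain CG RG where GD: "\<And>z. z \<in> closure (strip \<alpha>) \<inter> {z. \<bar>Re z\<bar> > M / 2} \<Longrightarrow>
            (Re z \<ge> RG \<longrightarrow> cmod (\<G> z) \<le> CG * cmod (exp (- of_real \<rho> * z))) \<and>
            (Re z \<le> - RG \<longrightarrow> cmod (\<G> z) \<le> CG * cmod (exp (of_real \<rho> * z)))"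
    using G_decay by blast
  define A0 where "A0 = \<bar>Ra\<bar> + \<bar>RG\<bar> + M + \<bar>\<kappa>p\<bar> + \<bar>\<kappa>m\<bar> + 2"
  have A0: "A0 \<ge> 1" "A0 \<ge> Ra" "A0 \<ge> RG" "A0 \<ge> M + \<bar>\<kappa>p\<bar> + 1" "A0 \<ge> M + \<bar>\<kappa>m\<bar> + 1"
    using M by (auto simp: A0_def)
  have Gcl: "continuous_on (closure (strip \<alpha>)) \<G>" by (rule smooth_upto_cont[OF G_smooth])
  have strip_iff: "w \<in> strip \<alpha> \<longleftrightarrow> -\<alpha> < Im w \<and> Im w < 0" for w by (simp add: strip_def)
  obtain N where N: "negligible N"
    and NP: "\<And>x. \<not> (\<Xi>p (g x) = \<Xi>m x + (Gc x + \<G> (of_real x) - \<G> (of_real (g x) - \<i> * of_real \<alpha>))) \<Longrightarrow> x \<in> N"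
    using AE_lborel_negligible[OF Xi_jump] by blast
  define Kx where "Kx = cmod Cm1 + \<bar>Ca\<bar>"
  have L2m: "\<Xi>m measurable_on {a..b} \<and> (\<lambda>x. (cmod (\<Xi>m x))\<^sup>2) integrable_on {a..b}" for a b
    using Xi_L2m by (simp add: L2_loc_def)
  have L2p: "(\<lambda>x. \<Xi>p (g x)) measurable_on {a..b} \<and> (\<lambda>x. (cmod (\<Xi>p (g x)))\<^sup>2) integrable_on {a..b}" for a b
    using Xi_L2p by (simp add: L2_loc_def)
  have plus: "\<exists>C R. \<forall>z. -\<alpha> < Im z \<longrightarrow> Im z < 0 \<longrightarrow> R \<le> Re z \<longrightarrow>
           cmod (\<Xi> z - 0 + \<G> z) \<le> C * cmod (exp (2*pi*\<i>/Complex \<kappa>p (-\<alpha>) * z))"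
  proof (rule half[where \<rho>=\<rho> and Aa=A0 and Kx=Kx and CG=CG and \<Xi>m=\<Xi>m and \<Xi>p=\<Xi>p])
    show "\<alpha> > 0" "\<rho> > 0" "A0 \<ge> 1" using \<alpha> \<rho> A0 by auto
    show "\<Xi> holomorphic_on {w. -\<alpha> < Im w \<and> Im w < 0 \<and> A0 < Re w}"
      by (rule holomorphic_on_subset[OF Xi_holo]) (auto simp: strip_def)
    show "\<G> holomorphic_on {w. -\<alpha> < Im w \<and> Im w < 0 \<and> A0 < Re w}"
      by (rule holomorphic_on_subset[OF G_holo]) (use A0 M in \<open>auto simp: strip_def\<close>)
    show "continuous_on {w. -\<alpha> \<le> Im w \<and> Im w \<le> 0 \<and> A0 < Re w} \<G>"
      by (rule continuous_on_subset[OF Gcl]) (use \<alpha> in \<open>auto intro: strip_closure_sub\<close>)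
    show "cmod (\<G> w) \<le> CG * exp (-\<rho> * Re w)" if "-\<alpha> < Im w" "Im w < 0" "A0 < Re w" for w
    proof -
      have "w \<in> closure (strip \<alpha>) \<inter> {z. \<bar>Re z\<bar> > M / 2}"
        using that A0 M closure_subset[of "strip \<alpha>"] by (auto simp: strip_def)
      moreover have "Re w \<ge> RG" using that A0 by linarith
      ultimately have "cmod (\<G> w) \<le> CG * cmod (exp (- of_real \<rho> * w))" using GD by blast
      then show ?thesis by simp
    qed
    show "cmod (\<Xi> w - 0) \<le> Kx / Re w" if "-\<alpha> < Im w" "Im w < 0" "A0 < Re w" for w
    proof -
      have "Re w \<ge> Ra" using that A0 by linarith
      then have h: "cmod (\<Xi> w - Cm1 / w) \<le> Ca / (cmod w)\<^sup>2" using XA[of w] that by (auto simp: strip_def)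
      have "Re w \<le> cmod w" by (rule complex_Re_le_cmod)
      then show ?thesis unfolding Kx_def using asym_bound[OF _ _ h, of "Re w"] that A0 by simp
    qed
    show "\<Xi>m measurable_on {a..b} \<and> (\<lambda>x. (cmod (\<Xi>m x))\<^sup>2) integrable_on {a..b}" for a b
      by (rule L2m)
    show "\<Xi>p measurable_on {a..b} \<and> (\<lambda>x. (cmod (\<Xi>p x))\<^sup>2) integrable_on {a..b}" if a: "A0 < a" for a b
    proof -
      have eq: "\<Xi>p (g (x - \<kappa>p)) = \<Xi>p x" if "x \<in> {a..b}" for x
        using g_right[rule_format, of "x - \<kappa>p"] that a A0 by auto
      have m1: "(\<lambda>x. \<Xi>p (g (1 * x + - \<kappa>p))) measurable_on {x. 1 * x + - \<kappa>p \<in> {a - \<kappa>p..b - \<kappa>p}}"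
        by (rule measurable_on_affine) (use L2p in auto)
      have "{x. 1 * x + - \<kappa>p \<in> {a - \<kappa>p..b - \<kappa>p}} = {a..b}" by auto
      with m1 have m2: "(\<lambda>x. \<Xi>p (g (x - \<kappa>p))) measurable_on {a..b}" by simp
      have i1: "(\<lambda>x. (cmod (\<Xi>p (g (x + - \<kappa>p))))\<^sup>2) integrable_on {a - \<kappa>p - - \<kappa>p..b - \<kappa>p - - \<kappa>p}"
        by (rule integrable_shift_real_ivl) (use L2p in auto)
      then have i2: "(\<lambda>x. (cmod (\<Xi>p (g (x - \<kappa>p))))\<^sup>2) integrable_on {a..b}" by simp
      show ?thesis
      proof
        show "\<Xi>p measurable_on {a..b}" by (rule measurable_on_eq[OF m2 eq])
        show "(\<lambda>x. (cmod (\<Xi>p x))\<^sup>2) integrable_on {a..b}" by (rule integrable_eq[OF i2]) (simp add: eq)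
      qed
    qed
    show "((\<lambda>y. integral {a..b} (\<lambda>x. (cmod (\<Xi> (Complex x (- y)) - \<Xi>m x))\<^sup>2)) \<longlongrightarrow> 0) (at_right 0)" for a b
      using Xi_bv_lower by blast
    show "((\<lambda>y. integral {a..b} (\<lambda>x. (cmod (\<Xi> (Complex x (- \<alpha> + y)) - \<Xi>p x))\<^sup>2)) \<longlongrightarrow> 0) (at_right 0)" for a b
      using Xi_bv_upper by blast
    show "negligible {x. A0 < x \<and> \<Xi>p x + \<G> (Complex x (-\<alpha>)) \<noteq> \<Xi>m (x - \<kappa>p) + \<G> (Complex (x - \<kappa>p) 0)}"
    proof (rule negligible_subset[OF negligible_affine_image[OF N, of 1 \<kappa>p]])
      show "{x. A0 < x \<and> \<Xi>p x + \<G> (Complex x (-\<alpha>)) \<noteq> \<Xi>m (x - \<kappa>p) + \<G> (Complex (x - \<kappa>p) 0)}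
            \<subseteq> (\<lambda>y. 1 * y + \<kappa>p) ` N"
      proof
        fix x assume x: "x \<in> {x. A0 < x \<and> \<Xi>p x + \<G> (Complex x (-\<alpha>)) \<noteq> \<Xi>m (x - \<kappa>p) + \<G> (Complex (x - \<kappa>p) 0)}"
        define x' where "x' = x - \<kappa>p"
        have x'M: "x' > M" using x A0 by (auto simp: x'_def)
        have gx: "g x' = x" using g_right[rule_format, of x'] x'M by (simp add: x'_def)
        have gc: "Gc x' = 0" using Gc_supp x'M M by auto
        have "x' \<in> N"
        proof (rule NP, rule notI)
          assume P: "\<Xi>p (g x') = \<Xi>m x' + (Gc x' + \<G> (of_real x') - \<G> (of_real (g x') - \<i> * of_real \<alpha>))"
          have e1: "(of_real x' :: complex) = Complex (x - \<kappa>p) 0" by (simp add: x'_def complex_eq_iff)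
          have e2: "(of_real x - \<i> * of_real \<alpha> :: complex) = Complex x (-\<alpha>)" by (simp add: complex_eq_iff)
          have P': "\<Xi>p x = \<Xi>m x' + (0 + \<G> (Complex (x - \<kappa>p) 0) - \<G> (Complex x (-\<alpha>)))"
            using P unfolding gx gc e1 e2 .
          then have "\<Xi>p x + \<G> (Complex x (-\<alpha>)) = \<Xi>m (x - \<kappa>p) + \<G> (Complex (x - \<kappa>p) 0)"
            unfolding x'_def by simp
          then show False using x by simp
        qed
        then show "x \<in> (\<lambda>y. 1 * y + \<kappa>p) ` N" by (auto simp: x'_def image_iff intro!: bexI[of _ x'])
      qed
    qed
  qed
  define r where "r w = - w - \<i> * of_real \<alpha>" for w
  have rRe: "Re (r w) = - Re w" and rIm: "Im (r w) = - \<alpha> - Im w" for w by (simp_all add: r_def)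
  have rC: "r (Complex x y) = Complex (-x) (-\<alpha> - y)" for x y by (simp add: r_def complex_eq_iff)
  have rr: "r (r w) = w" for w by (simp add: r_def)
  have rhol: "r holomorphic_on S" for S unfolding r_def by (intro holomorphic_intros)
  have minus: "\<exists>C R. \<forall>z. -\<alpha> < Im z \<longrightarrow> Im z < 0 \<longrightarrow> R \<le> Re z \<longrightarrow>
           cmod ((\<Xi> \<circ> r) z - C\<Xi> + (\<G> \<circ> r) z) \<le> C * cmod (exp (2*pi*\<i>/Complex \<kappa>m (-\<alpha>) * z))"
  proof (rule half[where \<rho>=\<rho> and Aa=A0 and Kx=Kx and CG=CG and \<Xi>m="\<lambda>x. \<Xi>p (-x)" and \<Xi>p="\<lambda>x. \<Xi>m (-x)"])
    show "\<alpha> > 0" "\<rho> > 0" "A0 \<ge> 1" using \<alpha> \<rho> A0 by auto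
    show "(\<Xi> \<circ> r) holomorphic_on {w. -\<alpha> < Im w \<and> Im w < 0 \<and> A0 < Re w}"
      by (rule holomorphic_on_compose_gen[OF rhol Xi_holo]) (auto simp: strip_def rRe rIm)
    show "(\<G> \<circ> r) holomorphic_on {w. -\<alpha> < Im w \<and> Im w < 0 \<and> A0 < Re w}"
      by (rule holomorphic_on_compose_gen[OF rhol G_holo]) (use A0 M in \<open>auto simp: strip_def rRe rIm\<close>)
    show "continuous_on {w. -\<alpha> \<le> Im w \<and> Im w \<le> 0 \<and> A0 < Re w} (\<G> \<circ> r)"
      by (rule continuous_on_compose[OF holomorphic_on_imp_continuous_on[OF rhol] continuous_on_subset[OF Gcl]])
         (use \<alpha> in \<open>auto intro!: strip_closure_sub simp: rRe rIm\<close>)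
    show "cmod ((\<G> \<circ> r) w) \<le> CG * exp (-\<rho> * Re w)" if "-\<alpha> < Im w" "Im w < 0" "A0 < Re w" for w
    proof -
      have "r w \<in> closure (strip \<alpha>) \<inter> {z. \<bar>Re z\<bar> > M / 2}"
        using that A0 M closure_subset[of "strip \<alpha>"] by (auto simp: strip_def rRe rIm)
      moreover have "Re (r w) \<le> - RG" using that A0 by (simp add: rRe)
      ultimately have "cmod (\<G> (r w)) \<le> CG * cmod (exp (of_real \<rho> * r w))" using GD by blast
      then show ?thesis by (simp add: rRe)
    qed
    show "cmod ((\<Xi> \<circ> r) w - C\<Xi>) \<le> Kx / Re w" if "-\<alpha> < Im w" "Im w < 0" "A0 < Re w" for w
    proof -
      have "Re (r w) \<le> - Ra" using that A0 by (simp add: rRe)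
      then have h: "cmod ((\<Xi> (r w) - C\<Xi>) - Cm1 / r w) \<le> Ca / (cmod (r w))\<^sup>2"
        using XA[of "r w"] that by (auto simp: strip_def rRe rIm)
      have "Re w \<le> cmod (r w)" using abs_Re_le_cmod[of "r w"] by (simp add: rRe)
      then show ?thesis unfolding Kx_def using asym_bound[OF _ _ h, of "Re w"] that A0 by simp
    qed
    show "(\<lambda>x. \<Xi>p (-x)) measurable_on {a..b} \<and> (\<lambda>x. (cmod (\<Xi>p (-x)))\<^sup>2) integrable_on {a..b}"
      if a: "A0 < a" for a b
    proof -
      have eq: "\<Xi>p (g (-x - \<kappa>m)) = \<Xi>p (-x)" if "x \<in> {a..b}" for x
        using g_left[rule_format, of "-x - \<kappa>m"] that a A0 by auto
      have m1: "(\<lambda>x. \<Xi>p (g ((-1) * x + - \<kappa>m))) measurable_on {x. (-1) * x + - \<kappa>m \<in> {-b - \<kappa>m..-a - \<kappa>m}}"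
        by (rule measurable_on_affine) (use L2p in auto)
      have "{x. (-1) * x + - \<kappa>m \<in> {-b - \<kappa>m..-a - \<kappa>m}} = {a..b}" by auto
      with m1 have m2: "(\<lambda>x. \<Xi>p (g (-x - \<kappa>m))) measurable_on {a..b}" by simp
      have i1: "(\<lambda>x. (cmod (\<Xi>p (g (x + - \<kappa>m))))\<^sup>2) integrable_on {-b - \<kappa>m - - \<kappa>m..-a - \<kappa>m - - \<kappa>m}"
        by (rule integrable_shift_real_ivl) (use L2p in auto)
      then have "(\<lambda>x. (cmod (\<Xi>p (g (x - \<kappa>m))))\<^sup>2) integrable_on {-b..-a}" by simp
      then have "(\<lambda>x. (cmod (\<Xi>p (g (-x - \<kappa>m))))\<^sup>2) integrable_on {- (-a)..- (-b)}"
        using Henstock_Kurzweil_Integration.integrable_reflect_real[where f="\<lambda>x. (cmod (\<Xi>p (g (x - \<kappa>m))))\<^sup>2" and a="-b" and b="-a"] by simp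
      then have i2: "(\<lambda>x. (cmod (\<Xi>p (g (-x - \<kappa>m))))\<^sup>2) integrable_on {a..b}" by simp
      show ?thesis
      proof
        show "(\<lambda>x. \<Xi>p (-x)) measurable_on {a..b}" by (rule measurable_on_eq[OF m2 eq])
        show "(\<lambda>x. (cmod (\<Xi>p (-x)))\<^sup>2) integrable_on {a..b}" by (rule integrable_eq[OF i2]) (simp add: eq)
      qed
    qed
    show "(\<lambda>x. \<Xi>m (-x)) measurable_on {a..b} \<and> (\<lambda>x. (cmod (\<Xi>m (-x)))\<^sup>2) integrable_on {a..b}"
      if a: "A0 < a" for a b
    proof
      have m1: "(\<lambda>x. \<Xi>m ((-1) * x + 0)) measurable_on {x. (-1) * x + 0 \<in> {-b..-a}}"
        by (rule measurable_on_affine) (use L2m in auto)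
      have "{x. (-1) * x + 0 \<in> {-b..-a}} = {a..b}" by auto
      with m1 show "(\<lambda>x. \<Xi>m (-x)) measurable_on {a..b}" by simp
      have "(\<lambda>x. (cmod (\<Xi>m (-x)))\<^sup>2) integrable_on {- (-a)..- (-b)}"
        using Henstock_Kurzweil_Integration.integrable_reflect_real[where f="\<lambda>x. (cmod (\<Xi>m x))\<^sup>2" and a="-b" and b="-a"] L2m by simp
      then show "(\<lambda>x. (cmod (\<Xi>m (-x)))\<^sup>2) integrable_on {a..b}" by simp
    qed
    show "((\<lambda>y. integral {a..b} (\<lambda>x. (cmod ((\<Xi> \<circ> r) (Complex x (- y)) - \<Xi>p (-x)))\<^sup>2)) \<longlongrightarrow> 0) (at_right 0)" for a b
    proof -
      have "integral {a..b} (\<lambda>x. (cmod ((\<Xi> \<circ> r) (Complex x (- y)) - \<Xi>p (-x)))\<^sup>2) =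
            integral {-b..-a} (\<lambda>x. (cmod (\<Xi> (Complex x (- \<alpha> + y)) - \<Xi>p x))\<^sup>2)" for y
        using Henstock_Kurzweil_Integration.integral_reflect_real[where a="-b" and b="-a" and f="\<lambda>x. (cmod (\<Xi> (Complex x (- \<alpha> + y)) - \<Xi>p x))\<^sup>2"]
        by (simp add: rC)
      then show ?thesis using Xi_bv_upper by simp
    qed
    show "((\<lambda>y. integral {a..b} (\<lambda>x. (cmod ((\<Xi> \<circ> r) (Complex x (- \<alpha> + y)) - \<Xi>m (-x)))\<^sup>2)) \<longlongrightarrow> 0) (at_right 0)" for a b
    proof -
      have "integral {a..b} (\<lambda>x. (cmod ((\<Xi> \<circ> r) (Complex x (- \<alpha> + y)) - \<Xi>m (-x)))\<^sup>2) =
            integral {-b..-a} (\<lambda>x. (cmod (\<Xi> (Complex x (- y)) - \<Xi>m x))\<^sup>2)" for y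
        using Henstock_Kurzweil_Integration.integral_reflect_real[where a="-b" and b="-a" and f="\<lambda>x. (cmod (\<Xi> (Complex x (- y)) - \<Xi>m x))\<^sup>2"]
        by (simp add: rC)
      then show ?thesis using Xi_bv_lower by simp
    qed
    show "negligible {x. A0 < x \<and> \<Xi>m (-x) + (\<G> \<circ> r) (Complex x (-\<alpha>)) \<noteq> \<Xi>p (- (x - \<kappa>m)) + (\<G> \<circ> r) (Complex (x - \<kappa>m) 0)}"
    proof (rule negligible_subset[OF negligible_affine_image[OF N, of "-1" 0]])
      show "{x. A0 < x \<and> \<Xi>m (-x) + (\<G> \<circ> r) (Complex x (-\<alpha>)) \<noteq> \<Xi>p (- (x - \<kappa>m)) + (\<G> \<circ> r) (Complex (x - \<kappa>m) 0)}
            \<subseteq> (\<lambda>y. (-1) * y + 0) ` N"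
      proof
        fix x assume x: "x \<in> {x. A0 < x \<and> \<Xi>m (-x) + (\<G> \<circ> r) (Complex x (-\<alpha>)) \<noteq> \<Xi>p (- (x - \<kappa>m)) + (\<G> \<circ> r) (Complex (x - \<kappa>m) 0)}"
        define x' where "x' = - x"
        have x'M: "x' < - M" using x A0 by (auto simp: x'_def)
        have gx: "g x' = \<kappa>m - x" using g_left[rule_format, of x'] x'M by (simp add: x'_def)
        have gc: "Gc x' = 0" using Gc_supp x'M M by auto
        have "x' \<in> N"
        proof (rule NP, rule notI)
          assume P: "\<Xi>p (g x') = \<Xi>m x' + (Gc x' + \<G> (of_real x') - \<G> (of_real (g x') - \<i> * of_real \<alpha>))"
          have e1: "(of_real x' :: complex) = Complex (-x) 0" by (simp add: x'_def complex_eq_iff)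
          have e2: "(of_real (\<kappa>m - x) - \<i> * of_real \<alpha> :: complex) = Complex (\<kappa>m - x) (-\<alpha>)" by (simp add: complex_eq_iff)
          have P': "\<Xi>p (\<kappa>m - x) = \<Xi>m x' + (0 + \<G> (Complex (-x) 0) - \<G> (Complex (\<kappa>m - x) (-\<alpha>)))"
            using P unfolding gx gc e1 e2 .
          moreover have "(\<G> \<circ> r) (Complex x (-\<alpha>)) = \<G> (Complex (-x) 0)" by (simp add: rC)
          moreover have "(\<G> \<circ> r) (Complex (x - \<kappa>m) 0) = \<G> (Complex (\<kappa>m - x) (-\<alpha>))" by (simp add: rC)
          ultimately have "\<Xi>m (-x) + (\<G> \<circ> r) (Complex x (-\<alpha>)) = \<Xi>p (- (x - \<kappa>m)) + (\<G> \<circ> r) (Complex (x - \<kappa>m) 0)"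
            unfolding x'_def by simp
          then show False using x by simp
        qed
        then show "x \<in> (\<lambda>y. (-1) * y + 0) ` N" by (auto simp: x'_def image_iff intro!: bexI[of _ x'])
      qed
    qed
  qed
  obtain C1 R1 where P1: "\<And>z. -\<alpha> < Im z \<Longrightarrow> Im z < 0 \<Longrightarrow> R1 \<le> Re z \<Longrightarrow>
           cmod (\<Xi> z - 0 + \<G> z) \<le> C1 * cmod (exp (2*pi*\<i>/Complex \<kappa>p (-\<alpha>) * z))"
    using plus by blast
  obtain C2 R2 where P2: "\<And>z. -\<alpha> < Im z \<Longrightarrow> Im z < 0 \<Longrightarrow> R2 \<le> Re z \<Longrightarrow>
           cmod ((\<Xi> \<circ> r) z - C\<Xi> + (\<G> \<circ> r) z) \<le> C2 * cmod (exp (2*pi*\<i>/Complex \<kappa>m (-\<alpha>) * z))"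
    using minus by blast
  define cp where "cp = 2*pi*\<i>/Complex \<kappa>p (-\<alpha>)"
  define cm where "cm = 2*pi*\<i>/Complex \<kappa>m (-\<alpha>)"
  define Dm where "Dm = cmod (exp (- cm * (\<i> * of_real \<alpha>)))"
  have a0: "(of_real \<alpha> :: complex) \<noteq> 0" using \<alpha> by simp
  have pk: "Complex k (-\<alpha>) = - \<i> * of_real \<alpha> + of_real k" for k by (simp add: complex_eq_iff)
  have pk0: "- \<i> * of_real \<alpha> + of_real k \<noteq> (0::complex)" for k using \<alpha> by (simp add: complex_eq_iff)
  have ep: "- (2 * of_real pi / of_real \<alpha>) * ((- \<i> * of_real \<alpha>) / (- \<i> * of_real \<alpha> + of_real \<kappa>p)) = cp"
    using a0 pk0[of \<kappa>p] unfolding cp_def pk by (simp add: field_simps)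
  have em: "(2 * of_real pi / of_real \<alpha>) * ((- \<i> * of_real \<alpha>) / (- \<i> * of_real \<alpha> + of_real \<kappa>m)) = - cm"
    using a0 pk0[of \<kappa>m] unfolding cm_def pk by (simp add: field_simps)
  have plusB: "cmod (\<Xi> z + \<G> z) \<le> max C1 (C2 * Dm) *
          cmod (exp (- (2 * of_real pi / of_real \<alpha>) * ((- \<i> * of_real \<alpha>) / (- \<i> * of_real \<alpha> + of_real \<kappa>p)) * z))"
    if z: "z \<in> strip \<alpha>" and zR: "max R1 R2 \<le> Re z" for z
  proof -
    have "cmod (\<Xi> z - 0 + \<G> z) \<le> C1 * cmod (exp (cp * z))"
      using P1[of z] z zR unfolding cp_def by (auto simp: strip_def)
    also have "\<dots> \<le> max C1 (C2 * Dm) * cmod (exp (cp * z))" by (intro mult_right_mono) auto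
    finally show ?thesis unfolding ep by simp
  qed
  have minusB: "cmod (\<Xi> z - C\<Xi> + \<G> z) \<le> max C1 (C2 * Dm) *
          cmod (exp ((2 * of_real pi / of_real \<alpha>) * ((- \<i> * of_real \<alpha>) / (- \<i> * of_real \<alpha> + of_real \<kappa>m)) * z))"
    if z: "z \<in> strip \<alpha>" and zR: "Re z \<le> - max R1 R2" for z
  proof -
    have "R2 \<le> Re (r z)" using zR by (simp add: rRe)
    moreover have "-\<alpha> < Im (r z)" "Im (r z) < 0" using z by (auto simp: strip_def rIm)
    ultimately have "cmod ((\<Xi> \<circ> r) (r z) - C\<Xi> + (\<G> \<circ> r) (r z)) \<le> C2 * cmod (exp (cm * r z))"
      using P2 unfolding cm_def by blast
    moreover have "cmod (exp (cm * r z)) = Dm * cmod (exp (- cm * z))"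
    proof -
      have "cm * r z = - cm * (\<i> * of_real \<alpha>) + - cm * z" by (simp add: r_def algebra_simps)
      then show ?thesis unfolding Dm_def by (simp only: exp_add norm_mult)
    qed
    ultimately have "cmod (\<Xi> z - C\<Xi> + \<G> z) \<le> (C2 * Dm) * cmod (exp (- cm * z))"
      by (simp add: rr mult.assoc)
    also have "\<dots> \<le> max C1 (C2 * Dm) * cmod (exp (- cm * z))" by (intro mult_right_mono) auto
    finally show ?thesis unfolding em by simp
  qed
  show ?thesis
    by (intro exI[of _ "max C1 (C2 * Dm)"] exI[of _ "max R1 R2"] ballI conjI impI plusB minusB) auto
qed

end
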